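(* Assume the standing hypotheses of the context and let $\varepsilon\in(0,\varepsilon_0]$. Any sequence $(\boldsymbol\rho^n)=(\rho_1^n,\rho_2^n)\subset\mathfrak X_0$ with $\mathcal E_\varepsilon(\boldsymbol\rho^n)$ uniformly bounded has a subsequence converging weakly in $L^1(\mathbb R^d)$ (componentwise) to some $\boldsymbol\rho\in\mathfrak X_0$. The same holds for sequences $(\boldsymbol\rho^n)\subset\mathcal P_2(\mathbb R^d)^2$ with $\mathcal E_\varepsilon(\boldsymbol\rho^n)$ uniformly bounded and $\mathfrak m_1[\rho_1^n]+\mathfrak m_1[\rho_2^n]\to0$.
   Context: Let $d\ge1$. Standing hypotheses. (K): $K:\mathbb R^d\to[0,\infty)$ radially symmetric, $K(0)=0$, $K\in C^2$, $\nabla^2K\ge\lambda\,\mathrm{Id}$ for some $\lambda>0$, $\|\nabla^2K\|\le C_K$. (F): for $j=1,2$, $F_j:[0,\infty)\to[0,\infty)$ is $C^2$, $F_j''>0$ on $(0,\infty)$, $F_j(0)=F_j'(0)=0$, $\liminf_{r\to\infty}F_j''(r)>0$, $\limsup_{r\to\infty}F_j'(r)/F_j(r)<\infty$; there are $m_j,M_j>0,\beta_j\ge0,r_0>0$ with $m_jr^{\beta_j}\le F_j''(r)\le M_jr^{\beta_j}$ on $[0,r_0]$; $F_j(r)-rF_j'(r)+r^2F_j''(r)\ge0$. (h): $h:[0,\infty)^2\to\mathbb R$ is $C^2$, $h$ and $\nabla h$ vanish on $\{r_1=0\}\cup\{r_2=0\}$. ($\theta$): with $\theta_{j,i}(\mathbf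 u)=\partial_{r_i}\partial_{r_j}h(\mathbf r)/F_i''(r_i)$, $r_k=(F_k')^{-1}(u_k)$, each $\theta_{j,i}$ is locally Lipschitz on $[0,\infty)^2$ and $|\theta_{j,i}(\mathbf u)|\le\kappa_{j,i}\min\{1,u_1,u_2,\sqrt{(F_i')^{-1}(u_i)/(F_j')^{-1}(u_j)}\}$ for constants $\kappa_{j,i}>0$. Notation: $\mathcal P_2(\mathbb R^d)$ probability measures with finite second moment (absolutely continuous ones identified with densities); $\mathfrak m_1[\rho]=\int x\rho$; $\mathfrak X_0=\{\boldsymbol\rho\in\mathcal P_2(\mathbb R^d)^2:\mathfrak m_1[\rho_1]+\mathfrak m_1[\rho_2]=0\}$; $\mathcal E_\varepsilon(\boldsymbol\rho)=\int[F_1(\rho_1)+F_2(\rho_2)+\varepsilon h(\rho_1,\rho_2)+\rho_1K*\rho_2]dx$, $=+\infty$ unless both components are absolutely continuous with integrand in $L^1$. $\varepsilon_0>0$ is a number such that $\mathbf r\mapsto F_1(r_1)+F_2(r_2)+2\varepsilon_0h(\mathbf r)$ is convex on $[0,\infty)^2$. *)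

theory Defs
  imports "HOL-Analysis.Analysis"
begin

text \<open>Densities on R^d (d = DIM('a)) w.r.t. Lebesgue measure.\<close>

definition P2_density :: "('a::euclidean_space \<Rightarrow> real) \<Rightarrow> bool" where
  "P2_density f \<longleftrightarrow> f \<in> borel_measurable lborel \<and> (\<forall>x. 0 \<le> f x) \<and>
     integrable lborel f \<and> (LINT x|lborel. f x) = 1 \<and>
     integrable lborel (\<lambda>x. (norm x)\<^sup>2 * f x)"

definition moment1 :: "('a::euclidean_space \<Rightarrow> real) \<Rightarrow> 'a" where
  "moment1 f = (LINT x|lborel. f x *\<^sub>R x)"

definition X0 :: "('a::euclidean_space \<Rightarrow> real) \<Rightarrow> ('a \<Rightarrow> real) \<Rightarrow> bool" where
  "X0 f g \<longleftrightarrow> P2_density f \<and> P2_density g \<and> moment1 f + moment1 g = 0"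

definition conv :: "('a::euclidean_space \<Rightarrow> real) \<Rightarrow> ('a \<Rightarrow> real) \<Rightarrow> 'a \<Rightarrow> real" where
  "conv K f x = (LINT y|lborel. K (x - y) * f y)"

definition energy ::
  "real \<Rightarrow> (real \<Rightarrow> real) \<Rightarrow> (real \<Rightarrow> real) \<Rightarrow> (real \<times> real \<Rightarrow> real) \<Rightarrow>
   ('a::euclidean_space \<Rightarrow> real) \<Rightarrow> ('a \<Rightarrow> real) \<Rightarrow> ('a \<Rightarrow> real) \<Rightarrow> ereal" where
  "energy \<epsilon> F1 F2 h K f g =
     (let e = (\<lambda>x. F1 (f x) + F2 (g x) + \<epsilon> * h (f x, g x) + f x * conv K g x)
      in if integrable lborel e then ereal (LINT x|lborel. e x) else \<infinity>)"

definition weak_L1_conv :: "(nat \<Rightarrow> 'a::euclidean_space \<Rightarrow> real) \<Rightarrow> ('a \<Rightarrow> real) \<Rightarrow> bool" where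
  "weak_L1_conv fs f \<longleftrightarrow> integrable lborel f \<and> (\<forall>n. integrable lborel (fs n)) \<and>
     (\<forall>g. g \<in> borel_measurable lborel \<and> bounded (range g) \<longrightarrow>
        (\<lambda>n. LINT x|lborel. fs n x * g x) \<longlonglongrightarrow> (LINT x|lborel. f x * g x))"

definition hypF :: "(real \<Rightarrow> real) \<Rightarrow> (real \<Rightarrow> real) \<Rightarrow> (real \<Rightarrow> real) \<Rightarrow> bool" where
  "hypF F F' F'' \<longleftrightarrow>
     (\<forall>r\<ge>0. 0 \<le> F r) \<and>
     (\<forall>r\<ge>0. (F has_real_derivative F' r) (at r within {0..})) \<and>
     (\<forall>r\<ge>0. (F' has_real_derivative F'' r) (at r within {0..})) \<and>
     continuous_on {0..} F'' \<and>
     (\<forall>r>0. F'' r > 0) \<and> F 0 = 0 \<and> F' 0 = 0 \<and>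
     Liminf at_top (\<lambda>r. ereal (F'' r)) > 0 \<and>
     Limsup at_top (\<lambda>r. ereal (F' r / F r)) < \<infinity> \<and>
     (\<exists>m M \<beta> r0. m > 0 \<and> M > 0 \<and> \<beta> \<ge> 0 \<and> r0 > 0 \<and>
        (\<forall>r. 0 \<le> r \<and> r \<le> r0 \<longrightarrow>
           m * (if r = 0 then (if \<beta> = 0 then 1 else 0) else r powr \<beta>) \<le> F'' r \<and>
           F'' r \<le> M * (if r = 0 then (if \<beta> = 0 then 1 else 0) else r powr \<beta>))) \<and>
     (\<forall>r\<ge>0. F r - r * F' r + r\<^sup>2 * F'' r \<ge> 0)"

definition quadrant :: "(real \<times> real) set" where
  "quadrant = {0..} \<times> {0..}"

definition invd :: "(real \<Rightarrow> real) \<Rightarrow> real \<Rightarrow> real" where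
  "invd F' u = the_inv_into {0..} F' u"

definition loc_lipschitz_quadrant :: "(real \<times> real \<Rightarrow> real) \<Rightarrow> bool" where
  "loc_lipschitz_quadrant f \<longleftrightarrow>
     (\<forall>p\<in>quadrant. \<exists>e>0. \<exists>L. L-lipschitz_on (cball p e \<inter> quadrant) f)"

text \<open>Hypothesis (theta) for theta_{j,i}: hij = d_{r_i} d_{r_j} h, Fi'' the second derivative
  of F_i, and Fi', Fj' the first derivatives of F_i, F_j; ui/uj select the coordinates.\<close>
definition theta_fun ::
  "(real \<times> real \<Rightarrow> real) \<Rightarrow> (real \<Rightarrow> real) \<Rightarrow> (real \<Rightarrow> real) \<Rightarrow> (real \<Rightarrow> real) \<Rightarrow>
   (real \<times> real \<Rightarrow> real) \<Rightarrow> real \<times> real \<Rightarrow> real" where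
  "theta_fun hij F1' F2' Fi'' ri u =
     hij (invd F1' (fst u), invd F2' (snd u)) / Fi'' (ri (invd F1' (fst u), invd F2' (snd u)))"

definition hyp_theta ::
  "(real \<times> real \<Rightarrow> real) \<Rightarrow> (real \<Rightarrow> real) \<Rightarrow> (real \<Rightarrow> real) \<Rightarrow> (real \<Rightarrow> real) \<Rightarrow>
   (real \<times> real \<Rightarrow> real) \<Rightarrow> (real \<times> real \<Rightarrow> real) \<Rightarrow> real \<Rightarrow> bool" where
  "hyp_theta hij F1' F2' Fi'' ri rj \<kappa> \<longleftrightarrow>
     loc_lipschitz_quadrant (theta_fun hij F1' F2' Fi'' ri) \<and>
     (\<forall>u\<in>quadrant. \<bar>theta_fun hij F1' F2' Fi'' ri u\<bar> \<le>
        \<kappa> * min (min 1 (fst u)) (min (snd u)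
          (sqrt (ri (invd F1' (fst u), invd F2' (snd u)) / rj (invd F1' (fst u), invd F2' (snd u))))))"

end

theory Submission
  imports Defs "HOL-Library.Diagonal_Subsequence"
begin

definition QV :: "'a::euclidean_space set" where "QV = {x. \<forall>i\<in>Basis. x \<bullet> i \<in> \<rat>}"
definition Gbox :: "'a::euclidean_space set set" where "Gbox = (\<lambda>(a,b). box a b) ` (QV \<times> QV)"

lemma QV_eq: "(QV::'a::euclidean_space set) = (\<lambda>f. \<Sum>i\<in>Basis. f i *\<^sub>R i) ` (Basis \<rightarrow>\<^sub>E \<rat>)"
proof
  show "(QV::'a set) \<subseteq> (\<lambda>f. \<Sum>i\<in>Basis. f i *\<^sub>R i) ` (Basis \<rightarrow>\<^sub>E \<rat>)"
  proof
    fix x :: 'a assume "x \<in> QV"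
    then have "restrict (\<lambda>i. x \<bullet> i) Basis \<in> Basis \<rightarrow>\<^sub>E \<rat>" by (auto simp: QV_def)
    moreover have "x = (\<Sum>i\<in>Basis. restrict (\<lambda>i. x \<bullet> i) Basis i *\<^sub>R i)"
      by (simp add: euclidean_representation)
    ultimately show "x \<in> (\<lambda>f. \<Sum>i\<in>Basis. f i *\<^sub>R i) ` (Basis \<rightarrow>\<^sub>E \<rat>)" by blast
  qed
qed (auto simp: QV_def inner_sum_left_Basis)

lemma countable_QV: "countable (QV::'a::euclidean_space set)"
  unfolding QV_eq by (intro countable_image countable_PiE) (auto intro: countable_rat)

lemma countable_Gbox: "countable (Gbox::'a::euclidean_space set set)"
  unfolding Gbox_def using countable_QV by auto

lemma Int_stable_Gbox: "Int_stable (Gbox::'a::euclidean_space set set)"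
  unfolding Int_stable_def
proof (intro ballI)
  fix A B :: "'a set" assume "A \<in> Gbox" "B \<in> Gbox"
  then obtain a b c d where abcd: "a \<in> QV" "b \<in> QV" "c \<in> QV" "d \<in> QV" "A = box a b" "B = box c d"
    by (auto simp: Gbox_def)
  define p :: 'a where "p = (\<Sum>i\<in>Basis. max (a\<bullet>i) (c\<bullet>i) *\<^sub>R i)"
  define q :: 'a where "q = (\<Sum>i\<in>Basis. min (b\<bullet>i) (d\<bullet>i) *\<^sub>R i)"
  have "p \<in> QV" "q \<in> QV" using abcd by (auto simp: p_def q_def QV_def inner_sum_left_Basis max_def min_def)
  moreover have "A \<inter> B = box p q"
    using abcd by (auto simp: mem_box p_def q_def inner_sum_left_Basis)
  ultimately show "A \<inter> B \<in> Gbox" by (auto simp: Gbox_def)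
qed

lemma borel_Gbox: "borel = sigma UNIV (Gbox::'a::euclidean_space set set)"
  unfolding Gbox_def
proof (rule borel_eq_sigmaI1[OF borel_def])
  fix M :: "'a set" assume "M \<in> {S. open S}"
  then have "open M" by simp
  define a' where "a' \<equiv> \<lambda>f :: 'a \<Rightarrow> real \<times> real. (\<Sum>(i::'a)\<in>Basis. fst (f i) *\<^sub>R i)"
  define b' where "b' \<equiv> \<lambda>f :: 'a \<Rightarrow> real \<times> real. (\<Sum>(i::'a)\<in>Basis. snd (f i) *\<^sub>R i)"
  define I where "I \<equiv> {f\<in>Basis \<rightarrow>\<^sub>E \<rat> \<times> \<rat>. box (a' f) (b' f) \<subseteq> M}"
  have M: "M = (\<Union>f\<in>I. box (a' f) (b' f))"
    using open_UNION_box[OF \<open>open M\<close>] unfolding a'_def b'_def I_def by simp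
  have cI: "countable I"
    unfolding I_def by (rule countable_subset[of _ "Basis \<rightarrow>\<^sub>E \<rat> \<times> \<rat>"]) (auto intro!: countable_PiE countable_rat)
  have "(\<lambda>f. box (a' f) (b' f)) ` I \<subseteq> sets (sigma UNIV ((\<lambda>(a,b). box a b) ` (QV \<times> QV)))"
  proof
    fix X assume "X \<in> (\<lambda>f. box (a' f) (b' f)) ` I"
    then obtain f where f: "f \<in> I" "X = box (a' f) (b' f)" by auto
    then have "a' f \<in> QV" "b' f \<in> QV" unfolding I_def QV_def a'_def b'_def
      by (auto simp: inner_sum_left_Basis PiE_def Pi_def)
    then show "X \<in> sets (sigma UNIV ((\<lambda>(a,b). box a b) ` (QV \<times> QV)))" using f by auto
  qed
  then show "M \<in> sets (sigma UNIV ((\<lambda>(a,b). box a b) ` (QV \<times> QV)))"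
    by (subst M) (rule sets.countable_UN'[OF cI])
qed auto

lemma diag_conv:
  fixes a :: "nat \<Rightarrow> nat \<Rightarrow> real"
  assumes b: "\<And>k. bounded (range (a k))"
  shows "\<exists>s. strict_mono s \<and> (\<forall>k. convergent (\<lambda>n. a k (s n)))"
proof -
  define P where "P k s \<longleftrightarrow> convergent (\<lambda>n. a k (s n))" for k and s :: "nat \<Rightarrow> nat"
  interpret subseqs P
  proof
    fix k and s :: "nat \<Rightarrow> nat" assume "strict_mono s"
    have "bounded (range (\<lambda>n. a k (s n)))"
      by (rule bounded_subset[OF b[of k]]) auto
    from bounded_imp_convergent_subsequence[OF this]
    obtain l r where "strict_mono r" "((\<lambda>n. a k (s n)) \<circ> r) \<longlonglongrightarrow> l" by blast
    then show "\<exists>r'. strict_mono r' \<and> P k (s \<circ> r')"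
      unfolding P_def convergent_def by (auto simp: o_def)
  qed
  have "P k (diagseq \<circ> (+) (Suc k))" for k
  proof (rule diagseq_holds)
    fix r s :: "nat \<Rightarrow> nat" and n assume "strict_mono r" "P n s"
    then show "P n (s \<circ> r)" unfolding P_def
      using convergent_subseq_convergent[of "\<lambda>m. a n (s m)" r] by (simp add: o_def)
  qed
  then have "convergent (\<lambda>n. a k (diagseq (n + Suc k)))" for k
    unfolding P_def by (simp add: o_def add.commute[of _ k])
  then have "convergent (\<lambda>n. a k (diagseq n))" for k
    using convergent_ignore_initial_segment[of "\<lambda>n. a k (diagseq n)" "Suc k"] by simp
  then show ?thesis using subseq_diagseq by blast
qed

lemma pt_bound:
  fixes f t R :: real and x :: "'a::euclidean_space"
  assumes "0 \<le> f" "t > 0" "R > 0"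
  shows "f * indicator A x \<le> t * indicator (A \<inter> cball 0 R) x + f\<^sup>2 / t + (norm x)\<^sup>2 * f / R\<^sup>2"
proof -
  have a: "0 \<le> f\<^sup>2 / t" "0 \<le> (norm x)\<^sup>2 * f / R\<^sup>2" "0 \<le> t * indicator (A \<inter> cball 0 R) x"
    using assms by auto
  show ?thesis
  proof (cases "x \<in> A")
    case False then show ?thesis using a by simp
  next
    case True
    show ?thesis
    proof (cases "norm x \<le> R")
      case False
      then have "R\<^sup>2 \<le> (norm x)\<^sup>2" using assms by (simp add: power_mono)
      then have "f \<le> (norm x)\<^sup>2 * f / R\<^sup>2" using assms
        by (simp add: le_divide_eq mult_left_mono mult.commute)
      then show ?thesis using a True by simp
    next
      case True': True
      show ?thesis
      proof (cases "f \<le> t")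
        case True
        have "indicator (A \<inter> cball 0 R) x = (1::real)" "indicator A x = (1::real)"
          using True' \<open>x \<in> A\<close> by (auto simp: indicator_def)
        then show ?thesis using a(1,2) True by simp
      next
        case False
        then have "f \<le> f\<^sup>2 / t" using assms by (simp add: le_divide_eq power2_eq_square)
        then show ?thesis using a \<open>x \<in> A\<close> by simp
      qed
    qed
  qed
qed

lemma conv_approx:
  fixes u :: "nat \<Rightarrow> real"
  assumes "\<And>e. e > 0 \<Longrightarrow> \<exists>v. convergent v \<and> (\<forall>n. \<bar>u n - v n\<bar> \<le> e)"
  shows "convergent u"
proof (rule Cauchy_convergent, rule metric_CauchyI)
  fix e :: real assume e: "e > 0"
  then obtain v where v: "convergent v" "\<And>n. \<bar>u n - v n\<bar> \<le> e / 4"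
    using assms[of "e/4"] by auto
  from metric_CauchyD[OF convergent_Cauchy[OF v(1)], of "e/4"] e
  obtain N where N: "\<And>m n. m \<ge> N \<Longrightarrow> n \<ge> N \<Longrightarrow> dist (v m) (v n) < e / 4" by auto
  have "dist (u m) (u n) < e" if "m \<ge> N" "n \<ge> N" for m n
    using N[OF that] v(2)[of m] v(2)[of n] e unfolding dist_real_def abs_less_iff abs_le_iff by linarith
  then show "\<exists>N. \<forall>m\<ge>N. \<forall>n\<ge>N. dist (u m) (u n) < e" by blast
qed

lemma sets_borel_Gbox: "sets borel = sigma_sets UNIV (Gbox::'a::euclidean_space set set)"
  by (subst borel_Gbox) (simp add: sets_measure_of)

locale dseq =
  fixes \<phi> :: "nat \<Rightarrow> 'a::euclidean_space \<Rightarrow> real" and Q M :: real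
  assumes meas: "\<And>n. \<phi> n \<in> borel_measurable borel"
  and nonneg: "\<And>n x. 0 \<le> \<phi> n x"
  and int: "\<And>n. integrable lborel (\<phi> n)"
  and one: "\<And>n. (LINT x|lborel. \<phi> n x) = 1"
  and sqi: "\<And>n. integrable lborel (\<lambda>x. (\<phi> n x)\<^sup>2)"
  and sqb: "\<And>n. (LINT x|lborel. (\<phi> n x)\<^sup>2) \<le> Q"
  and momi: "\<And>n. integrable lborel (\<lambda>x. (norm x)\<^sup>2 * \<phi> n x)"
  and momb: "\<And>n. (LINT x|lborel. (norm x)\<^sup>2 * \<phi> n x) \<le> M"
begin

lemma subseq: "dseq (\<phi> \<circ> s) Q M"
  by unfold_locales (auto intro: meas nonneg int one sqi sqb momi momb)

lemma int_ind: "A \<in> sets borel \<Longrightarrow> integrable lborel (\<lambda>x. \<phi> n x * indicator A x)"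
  by (rule integrable_real_mult_indicator) (auto intro: int)

lemma tail_bound:
  assumes A: "A \<in> sets borel" and "t > 0" "R > 0"
  shows "(LINT x|lborel. \<phi> n x * indicator A x) \<le> t * measure lborel (A \<inter> cball 0 R) + Q / t + M / R\<^sup>2"
proof -
  have AB: "A \<inter> cball 0 R \<in> sets lborel" using A by auto
  have fin: "emeasure lborel (A \<inter> cball 0 R) < \<infinity>"
    by (rule le_less_trans[OF emeasure_mono[of _ "cball 0 R"] emeasure_lborel_cball_finite]) auto
  have i1: "integrable lborel (\<lambda>x. t * indicator (A \<inter> cball 0 R) x :: real)"
    using AB fin by (intro integrable_mult_right integrable_indicator) auto
  have "(LINT x|lborel. \<phi> n x * indicator A x) \<le>
     (LINT x|lborel. t * indicator (A \<inter> cball 0 R) x + (\<phi> n x)\<^sup>2 / t + (norm x)\<^sup>2 * \<phi> n x / R\<^sup>2)"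
    using assms i1 int_ind[OF A] sqi momi nonneg
    by (intro integral_mono pt_bound) (auto intro!: Bochner_Integration.integrable_add integrable_divide)
  also have "\<dots> = t * measure lborel (A \<inter> cball 0 R) + (LINT x|lborel. (\<phi> n x)\<^sup>2) / t
      + (LINT x|lborel. (norm x)\<^sup>2 * \<phi> n x) / R\<^sup>2"
    using i1 sqi momi AB fin
    by (subst Bochner_Integration.integral_add, auto intro!: Bochner_Integration.integrable_add integrable_divide)
  also have "\<dots> \<le> t * measure lborel (A \<inter> cball 0 R) + Q / t + M / R\<^sup>2"
    using assms sqb momb by (intro add_mono divide_right_mono) auto
  finally show ?thesis .
qed

lemma M_nonneg: "0 \<le> M"
proof -
  have "0 \<le> (LINT x|lborel. (norm x)\<^sup>2 * \<phi> 0 x)" by (rule integral_nonneg_AE) (simp add: nonneg)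
  then show ?thesis using momb[of 0] by linarith
qed

lemma Q_nonneg: "0 \<le> Q"
proof -
  have "0 \<le> (LINT x|lborel. (\<phi> 0 x)\<^sup>2)" by (rule integral_nonneg_AE) simp
  then show ?thesis using sqb[of 0] by linarith
qed

lemma tail_small:
  fixes A :: "nat \<Rightarrow> 'a set"
  assumes dA: "disjoint_family A" and rA: "range A \<subseteq> sets borel" and e: "e > 0"
  shows "\<exists>N. \<forall>n. (LINT x|lborel. \<phi> n x * indicator (\<Union>i\<in>{N..}. A i) x) \<le> e"
proof -
  define R where "R = sqrt (3 * (M + 1) / e)"
  define t where "t = 3 * (Q + 1) / e"
  have R: "R > 0" "R\<^sup>2 = 3 * (M + 1) / e" using M_nonneg e by (auto simp: R_def)
  have t: "t > 0" using Q_nonneg e by (auto simp: t_def)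
  have "M / R\<^sup>2 = e / 3 * (M / (M + 1))" using M_nonneg e unfolding R(2) by (simp add: field_simps)
  moreover have "M / (M + 1) \<le> 1" using M_nonneg by simp
  ultimately have Mb: "M / R\<^sup>2 \<le> e / 3" using e
    by (metis less_eq_real_def mult.right_neutral mult_left_mono zero_le_divide_iff zero_le_numeral)
  have Qb: "Q / t \<le> e / 3" using Q_nonneg e by (simp add: t_def field_simps)
  define B where "B N = (\<Union>i\<in>{N..}. A i) \<inter> cball 0 R" for N
  have UA: "(\<Union>i\<in>{N..}. A i) \<in> sets borel" for N
    using rA by (intro sets.countable_UN') (auto intro: countableI_type)
  have Bs: "range B \<subseteq> sets lborel" using UA by (auto simp: B_def)
  have Bdec: "antimono_on UNIV B" unfolding B_def monotone_on_def by (auto intro: order_trans)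
  have Bfin: "emeasure lborel (B N) \<noteq> \<infinity>" for N
    using le_less_trans[OF emeasure_mono[of "B N" "cball 0 R"] emeasure_lborel_cball_finite]
    by (auto simp: B_def)
  have Bint: "(\<Inter>N. B N) = {}"
  proof (rule ccontr)
    assume "(\<Inter>N. B N) \<noteq> {}"
    then obtain x where x: "\<And>N. x \<in> B N" by auto
    from x[of 0] obtain i where i: "x \<in> A i" by (auto simp: B_def)
    from x[of "Suc i"] obtain j where j: "j \<ge> Suc i" "x \<in> A j" by (auto simp: B_def)
    then have "i \<noteq> j" by auto
    with dA i j show False unfolding disjoint_family_on_def by blast
  qed
  have "(\<lambda>N. emeasure lborel (B N)) \<longlonglongrightarrow> emeasure lborel (\<Inter>N. B N)"
    by (rule Lim_emeasure_decseq[OF Bs Bdec Bfin])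
  then have "(\<lambda>N. emeasure lborel (B N)) \<longlonglongrightarrow> ennreal 0" by (simp add: Bint)
  then have "(\<lambda>N. measure lborel (B N)) \<longlonglongrightarrow> 0"
    unfolding measure_def by (rule tendsto_enn2real) simp
  then have "eventually (\<lambda>N. measure lborel (B N) < e / 3 / t) sequentially"
    using e t by (intro order_tendstoD(2)) auto
  then obtain N where N: "measure lborel (B N) < e / 3 / t" by (auto simp: eventually_sequentially)
  have "(LINT x|lborel. \<phi> n x * indicator (\<Union>i\<in>{N..}. A i) x) \<le> e" for n
  proof -
    from tail_bound[OF UA t R(1), of n]
    have "(LINT x|lborel. \<phi> n x * indicator (\<Union>i\<in>{N..}. A i) x) \<le> t * measure lborel (B N) + Q / t + M / R\<^sup>2"
      by (simp add: B_def)
    also have "t * measure lborel (B N) \<le> e / 3" using N t by (simp add: field_simps)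
    finally show ?thesis using Mb Qb by linarith
  qed
  then show ?thesis by blast
qed

lemma ind_le1:
  assumes A: "A \<in> sets borel"
  shows "0 \<le> (LINT x|lborel. \<phi> n x * indicator A x)" "(LINT x|lborel. \<phi> n x * indicator A x) \<le> 1"
proof -
  show "0 \<le> (LINT x|lborel. \<phi> n x * indicator A x)"
    by (rule integral_nonneg_AE) (simp add: nonneg)
  have "(LINT x|lborel. \<phi> n x * indicator A x) \<le> (LINT x|lborel. \<phi> n x)"
    using int_ind[OF A] int nonneg by (intro integral_mono) (auto simp: indicator_def)
  then show "(LINT x|lborel. \<phi> n x * indicator A x) \<le> 1" using one by simp
qed

lemma ind_split:
  fixes A :: "nat \<Rightarrow> 'a set"
  assumes dA: "disjoint_family A" and rA: "range A \<subseteq> sets borel"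
  shows "(LINT x|lborel. \<phi> n x * indicator (\<Union>i. A i) x) =
    (\<Sum>i<N. (LINT x|lborel. \<phi> n x * indicator (A i) x)) + (LINT x|lborel. \<phi> n x * indicator (\<Union>i\<in>{N..}. A i) x)"
proof -
  have UA: "(\<Union>i\<in>{N..}. A i) \<in> sets borel"
    using rA by (intro sets.countable_UN') (auto intro: countableI_type)
  have "indicator (\<Union>i. A i) x = (\<Sum>i<N. indicator (A i) x) + (indicator (\<Union>i\<in>{N..}. A i) x :: real)" for x :: 'a
  proof -
    have "{..<N} \<union> {N..} = (UNIV::nat set)" by auto
    then have "(\<Union>i. A i) = (\<Union>i\<in>{..<N} \<union> {N..}. A i)" by simp
    then have "(\<Union>i. A i) = (\<Union>i\<in>{..<N}. A i) \<union> (\<Union>i\<in>{N..}. A i)" by (simp only: UN_Un)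
    moreover have "(\<Union>i\<in>{..<N}. A i) \<inter> (\<Union>i\<in>{N..}. A i) = {}"
    proof (rule equals0I)
      fix y assume "y \<in> (\<Union>i\<in>{..<N}. A i) \<inter> (\<Union>i\<in>{N..}. A i)"
      then obtain i j where ij: "i < N" "j \<ge> N" "y \<in> A i" "y \<in> A j" by auto
      then have "i \<noteq> j" by auto
      with dA ij show False unfolding disjoint_family_on_def by blast
    qed
    ultimately have "indicator (\<Union>i. A i) x = indicator (\<Union>i\<in>{..<N}. A i) x + (indicator (\<Union>i\<in>{N..}. A i) x :: real)"
      by (simp add: indicator_union_arith indicator_inter_arith[symmetric])
    moreover have "indicator (\<Union>i\<in>{..<N}. A i) x = (\<Sum>i<N. indicator (A i) x :: real)"
      by (rule indicator_UN_disjoint) (use dA in \<open>auto simp: disjoint_family_on_def\<close>)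
    ultimately show ?thesis by simp
  qed
  then have eq: "(\<lambda>x. \<phi> n x * indicator (\<Union>i. A i) x) =
      (\<lambda>x. (\<Sum>i<N. \<phi> n x * indicator (A i) x) + \<phi> n x * indicator (\<Union>i\<in>{N..}. A i) x)"
    by (simp add: sum_distrib_left distrib_left)
  have i1: "integrable lborel (\<lambda>x. \<Sum>i<N. \<phi> n x * indicator (A i) x)"
    using rA by (intro Bochner_Integration.integrable_sum int_ind) auto
  have i2: "integrable lborel (\<lambda>x. \<phi> n x * indicator (\<Union>i\<in>{N..}. A i) x)"
    by (rule int_ind[OF UA])
  show ?thesis unfolding eq
    apply (subst Bochner_Integration.integral_add[OF i1 i2])
    apply (subst Bochner_Integration.integral_sum)
    using int_ind rA by auto
qed

lemma dynkin_ext: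
  assumes G: "\<And>A. A \<in> Gbox \<Longrightarrow> convergent (\<lambda>n. LINT x|lborel. \<phi> n x * indicator A x)"
  and A: "A \<in> sets borel"
  shows "convergent (\<lambda>n. LINT x|lborel. \<phi> n x * indicator A x)"
proof -
  from A have A': "A \<in> sigma_sets UNIV Gbox" by (simp add: sets_borel_Gbox)
  show ?thesis
  proof (rule sigma_sets_induct_disjoint[OF Int_stable_Gbox _ A', where P = "\<lambda>A. convergent (\<lambda>n. LINT x|lborel. \<phi> n x * indicator A x)"])
    show "Gbox \<subseteq> Pow UNIV" by simp
  next
    fix A :: "'a set" assume "A \<in> Gbox" then show "convergent (\<lambda>n. LINT x|lborel. \<phi> n x * indicator A x)" by (rule G)
  next
    show "convergent (\<lambda>n. LINT x|lborel. \<phi> n x * indicator {} x)" by (simp add: convergent_const)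
  next
    fix A :: "'a set" assume 4: "A \<in> sigma_sets UNIV Gbox" "convergent (\<lambda>n. LINT x|lborel. \<phi> n x * indicator A x)"
    then have As: "A \<in> sets borel" by (simp add: sets_borel_Gbox)
    have "(\<lambda>x. \<phi> n x * indicator (UNIV - A) x) = (\<lambda>x. \<phi> n x - \<phi> n x * indicator A x)" for n
      by (auto simp: indicator_def)
    then have "(LINT x|lborel. \<phi> n x * indicator (UNIV - A) x) = 1 - (LINT x|lborel. \<phi> n x * indicator A x)" for n
      using int int_ind[OF As] one by (simp add: Bochner_Integration.integral_diff)
    then show "convergent (\<lambda>n. LINT x|lborel. \<phi> n x * indicator (UNIV - A) x)"
      using 4(2) by (simp add: convergent_diff convergent_const)
  next
    fix A :: "nat \<Rightarrow> 'a set"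
    assume 5: "disjoint_family A" "range A \<subseteq> sigma_sets UNIV Gbox"
      "\<And>i. convergent (\<lambda>n. LINT x|lborel. \<phi> n x * indicator (A i) x)"
    have rA: "range A \<subseteq> sets borel" using 5(2) by (simp add: sets_borel_Gbox)
    show "convergent (\<lambda>n. LINT x|lborel. \<phi> n x * indicator (\<Union>i. A i) x)"
    proof (rule conv_approx)
      fix e :: real assume e: "e > 0"
      from tail_small[OF 5(1) rA e] obtain N where
        N: "\<And>n. (LINT x|lborel. \<phi> n x * indicator (\<Union>i\<in>{N..}. A i) x) \<le> e" by blast
      have UA: "(\<Union>i\<in>{N..}. A i) \<in> sets borel"
        using rA by (intro sets.countable_UN') (auto intro: countableI_type)
      let ?v = "\<lambda>n. \<Sum>i<N. (LINT x|lborel. \<phi> n x * indicator (A i) x)"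
      have "convergent ?v" using 5(3) by (intro convergent_sum) auto
      moreover have "\<bar>(LINT x|lborel. \<phi> n x * indicator (\<Union>i. A i) x) - ?v n\<bar> \<le> e" for n
        using ind_split[OF 5(1) rA, of n N] N[of n] ind_le1(1)[OF UA, of n] by simp
      ultimately show "\<exists>v. convergent v \<and> (\<forall>n. \<bar>(LINT x|lborel. \<phi> n x * indicator (\<Union>i. A i) x) - v n\<bar> \<le> e)"
        by blast
    qed
  qed
qed

end

lemma (in dseq) exists_conv_sets:
  "\<exists>s. strict_mono s \<and> (\<forall>A\<in>sets borel. convergent (\<lambda>n. LINT x|lborel. \<phi> (s n) x * indicator A x))"
proof -
  have "(0::'a) \<in> QV" by (simp add: QV_def)
  then have "box 0 0 \<in> (Gbox :: 'a set set)" unfolding Gbox_def by (intro image_eqI[where x="(0,0)"]) auto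
  then have ne: "(Gbox :: 'a set set) \<noteq> {}" by auto
  define G where "G = from_nat_into (Gbox :: 'a set set)"
  have rG: "range G = Gbox" unfolding G_def by (rule range_from_nat_into[OF ne countable_Gbox])
  have Gs: "G k \<in> sets borel" for k
  proof -
    have "G k \<in> Gbox" using rG by auto
    then show ?thesis by (auto simp: Gbox_def)
  qed
  define a where "a k n = (LINT x|lborel. \<phi> n x * indicator (G k) x)" for k n
  have "bounded (range (a k))" for k
    unfolding bounded_real
  proof (intro exI[of _ 1] ballI)
    fix y assume "y \<in> range (a k)"
    then obtain n where "y = a k n" by auto
    then show "\<bar>y\<bar> \<le> 1" using ind_le1[OF Gs[of k], of n] unfolding a_def abs_le_iff by linarith
  qed
  from diag_conv[of a, OF this] obtain s where s: "strict_mono s" "\<And>k. convergent (\<lambda>n. a k (s n))" by blast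
  interpret ps: dseq "\<phi> \<circ> s" Q M by (rule subseq)
  have "convergent (\<lambda>n. LINT x|lborel. (\<phi> \<circ> s) n x * indicator A x)" if "A \<in> sets borel" for A
  proof (rule ps.dynkin_ext[OF _ that])
    fix B :: "'a set" assume "B \<in> Gbox"
    then obtain k where "B = G k" using rG by auto
    then show "convergent (\<lambda>n. LINT x|lborel. (\<phi> \<circ> s) n x * indicator B x)" using s(2)[of k] by (simp add: a_def)
  qed
  then show ?thesis using s(1) by auto
qed

lemma approx_lim:
  fixes a :: "nat \<Rightarrow> real"
  assumes b: "\<And>m. b m \<longlonglongrightarrow> c m" and ab: "\<And>m n. \<bar>a n - b m n\<bar> \<le> e m"
    and Ac: "\<And>m. \<bar>A - c m\<bar> \<le> e m" and e: "e \<longlonglongrightarrow> 0"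
  shows "a \<longlonglongrightarrow> A"
proof (rule metric_LIMSEQ_I)
  fix r :: real assume r: "r > 0"
  from metric_LIMSEQ_D[OF e, of "r/3"] r obtain m where m: "dist (e m) 0 < r / 3" by auto
  from metric_LIMSEQ_D[OF b[of m], of "r/3"] r obtain N where N: "\<And>n. n \<ge> N \<Longrightarrow> dist (b m n) (c m) < r / 3" by auto
  have "dist (a n) A < r" if "n \<ge> N" for n
    using N[OF that] m ab[of n m] Ac[of m] unfolding dist_real_def abs_less_iff abs_le_iff by linarith
  then show "\<exists>no. \<forall>n\<ge>no. dist (a n) A < r" by blast
qed

lemma int_bounded:
  fixes g \<psi> :: "'a \<Rightarrow> real"
  assumes "integrable M \<psi>" "g \<in> borel_measurable M" "\<And>x. \<bar>g x\<bar> \<le> B"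
  shows "integrable M (\<lambda>x. \<psi> x * g x)"
proof (rule Bochner_Integration.integrable_bound[of _ "\<lambda>x. B * \<psi> x"])
  show "integrable M (\<lambda>x. B * \<psi> x)" using assms(1) by simp
  show "(\<lambda>x. \<psi> x * g x) \<in> borel_measurable M" using assms by (simp add: borel_measurable_integrable)
  show "AE x in M. norm (\<psi> x * g x) \<le> norm (B * \<psi> x)"
  proof (rule AE_I2)
    fix x
    have "\<bar>\<psi> x\<bar> * \<bar>g x\<bar> \<le> \<bar>\<psi> x\<bar> * \<bar>B\<bar>"
      using assms(3)[of x] by (intro mult_left_mono) auto
    then show "norm (\<psi> x * g x) \<le> norm (B * \<psi> x)" by (simp add: abs_mult mult.commute)
  qed
qed

lemma approx_err:
  fixes g h \<psi> :: "'a \<Rightarrow> real"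
  assumes "integrable M \<psi>" "\<And>x. 0 \<le> \<psi> x" "(LINT x|M. \<psi> x) = 1"
    "integrable M (\<lambda>x. \<psi> x * g x)" "integrable M (\<lambda>x. \<psi> x * h x)"
    "\<And>x. \<bar>g x - h x\<bar> \<le> e"
  shows "\<bar>(LINT x|M. \<psi> x * g x) - (LINT x|M. \<psi> x * h x)\<bar> \<le> e"
proof -
  have "\<bar>(LINT x|M. \<psi> x * g x) - (LINT x|M. \<psi> x * h x)\<bar> = norm (LINT x|M. \<psi> x * g x - \<psi> x * h x)"
    using assms by (simp add: Bochner_Integration.integral_diff)
  also have "\<dots> \<le> (LINT x|M. norm (\<psi> x * g x - \<psi> x * h x))" by (rule integral_norm_bound)
  also have "\<dots> \<le> (LINT x|M. e * \<psi> x)"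
  proof (rule integral_mono)
    show "integrable M (\<lambda>x. norm (\<psi> x * g x - \<psi> x * h x))" using assms by auto
    show "integrable M (\<lambda>x. e * \<psi> x)" using assms by auto
    fix x
    have "norm (\<psi> x * g x - \<psi> x * h x) = \<psi> x * \<bar>g x - h x\<bar>"
      using assms(2)[of x] by (simp add: abs_mult right_diff_distrib[symmetric])
    also have "\<dots> \<le> \<psi> x * e" using assms(2,6) by (intro mult_left_mono) auto
    finally show "norm (\<psi> x * g x - \<psi> x * h x) \<le> e * \<psi> x" by (simp add: mult.commute)
  qed
  also have "\<dots> = e" using assms by simp
  finally show ?thesis .
qed

definition lvl :: "('a \<Rightarrow> real) \<Rightarrow> nat \<Rightarrow> int \<Rightarrow> 'a set" where
  "lvl g m j = {x. \<lfloor>real m * g x\<rfloor> = j}"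

lemma lvl_meas:
  fixes g :: "'a::euclidean_space \<Rightarrow> real"
  assumes [measurable]: "g \<in> borel_measurable borel"
  shows "lvl g m j \<in> sets borel"
proof -
  have "lvl g m j = {x. of_int j \<le> real m * g x \<and> real m * g x < of_int j + 1}"
    unfolding lvl_def by (auto simp: floor_eq_iff)
  also have "\<dots> \<in> sets borel" by measurable
  finally show ?thesis .
qed

lemma simple_approx:
  fixes g :: "'a \<Rightarrow> real"
  assumes B: "\<And>x. \<bar>g x\<bar> \<le> B" and m: "m > 0"
  shows "\<bar>g x - (\<Sum>j\<in>{-(\<lceil>real m * B\<rceil> + 1)..\<lceil>real m * B\<rceil> + 1}. of_int j / real m * indicator (lvl g m j) x)\<bar> \<le> 1 / real m"
proof -
  define K where "K = \<lceil>real m * B\<rceil> + 1"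
  define k where "k = \<lfloor>real m * g x\<rfloor>"
  have mB: "\<bar>real m * g x\<bar> \<le> real m * B" using B[of x] m by (simp add: abs_mult mult_left_mono)
  have "k \<in> {-K..K}"
  proof -
    have "\<lfloor>- (real m * B)\<rfloor> \<le> k" unfolding k_def using mB by (intro floor_mono) (simp add: abs_le_iff)
    then have "- \<lceil>real m * B\<rceil> \<le> k" by (simp add: floor_minus)
    moreover have "k \<le> \<lfloor>real m * B\<rfloor>" unfolding k_def using mB by (intro floor_mono) (simp add: abs_le_iff)
    moreover have "\<lfloor>real m * B\<rfloor> \<le> \<lceil>real m * B\<rceil>" by (rule floor_le_ceiling)
    ultimately have "- \<lceil>real m * B\<rceil> \<le> k" "k \<le> \<lceil>real m * B\<rceil>" by linarith+
    then show ?thesis unfolding K_def by auto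
  qed
  have "(\<Sum>j\<in>{-K..K}. of_int j / real m * indicator (lvl g m j) x) = (\<Sum>j\<in>{-K..K}. if k = j then of_int j / real m else 0)"
    by (intro sum.cong) (auto simp: lvl_def k_def indicator_def)
  also have "\<dots> = of_int k / real m" using \<open>k \<in> {-K..K}\<close> by (subst sum.delta') auto
  finally have eq: "(\<Sum>j\<in>{-K..K}. of_int j / real m * indicator (lvl g m j) x) = of_int k / real m" .
  have "real_of_int k \<le> real m * g x" "real m * g x < real_of_int k + 1" unfolding k_def by linarith+
  then have d: "0 \<le> real m * g x - of_int k" "real m * g x - of_int k \<le> 1" by linarith+
  have "g x - of_int k / real m = (real m * g x - of_int k) / real m" using m by (simp add: field_simps)
  moreover have "\<bar>(real m * g x - of_int k) / real m\<bar> \<le> 1 / real m"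
    using d m by (simp add: divide_right_mono)
  ultimately have "\<bar>g x - of_int k / real m\<bar> \<le> 1 / real m" by simp
  then show ?thesis using eq unfolding K_def by simp
qed

lemma simple_int:
  fixes \<psi> :: "'a::euclidean_space \<Rightarrow> real"
  assumes \<psi>: "integrable lborel \<psi>" and g: "g \<in> borel_measurable borel" and J: "finite J"
  shows "integrable lborel (\<lambda>x. \<psi> x * (\<Sum>j\<in>J. of_int j / real m * indicator (lvl g m j) x))"
    "(LINT x|lborel. \<psi> x * (\<Sum>j\<in>J. of_int j / real m * indicator (lvl g m j) x)) =
      (\<Sum>j\<in>J. of_int j / real m * (LINT x|lborel. \<psi> x * indicator (lvl g m j) x))"
proof -
  have eq: "(\<lambda>x. \<psi> x * (\<Sum>j\<in>J. of_int j / real m * indicator (lvl g m j) x)) =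
      (\<lambda>x. \<Sum>j\<in>J. of_int j / real m * (\<psi> x * indicator (lvl g m j) x))"
    by (simp add: sum_distrib_left mult.left_commute)
  have i: "integrable lborel (\<lambda>x. \<psi> x * indicator (lvl g m j) x)" for j
    using lvl_meas[OF g] \<psi> by (intro integrable_real_mult_indicator) auto
  show "integrable lborel (\<lambda>x. \<psi> x * (\<Sum>j\<in>J. of_int j / real m * indicator (lvl g m j) x))"
    unfolding eq using i by (intro Bochner_Integration.integrable_sum integrable_mult_right) auto
  show "(LINT x|lborel. \<psi> x * (\<Sum>j\<in>J. of_int j / real m * indicator (lvl g m j) x)) =
      (\<Sum>j\<in>J. of_int j / real m * (LINT x|lborel. \<psi> x * indicator (lvl g m j) x))"
    unfolding eq using i by (subst Bochner_Integration.integral_sum) auto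
qed

lemma weak_from_sets:
  fixes \<psi> :: "nat \<Rightarrow> 'a::euclidean_space \<Rightarrow> real" and \<sigma> :: "'a \<Rightarrow> real"
  assumes \<psi>: "\<And>n. integrable lborel (\<psi> n)" "\<And>n x. 0 \<le> \<psi> n x" "\<And>n. (LINT x|lborel. \<psi> n x) = 1"
   and \<sigma>: "integrable lborel \<sigma>" "\<And>x. 0 \<le> \<sigma> x" "(LINT x|lborel. \<sigma> x) = 1"
   and sets: "\<And>A. A \<in> sets borel \<Longrightarrow> (\<lambda>n. LINT x|lborel. \<psi> n x * indicator A x) \<longlonglongrightarrow> (LINT x|lborel. \<sigma> x * indicator A x)"
   and g: "g \<in> borel_measurable borel" "\<And>x. \<bar>g x\<bar> \<le> B"
  shows "(\<lambda>n. LINT x|lborel. \<psi> n x * g x) \<longlonglongrightarrow> (LINT x|lborel. \<sigma> x * g x)"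
proof -
  define J where "J m = {-(\<lceil>real (Suc m) * B\<rceil> + 1)..\<lceil>real (Suc m) * B\<rceil> + 1}" for m
  define gm where "gm m x = (\<Sum>j\<in>J m. of_int j / real (Suc m) * indicator (lvl g (Suc m) j) x)" for m x
  have fJ: "finite (J m)" for m by (simp add: J_def)
  have g': "g \<in> borel_measurable lborel" using g(1) by simp
  have err: "\<bar>g x - gm m x\<bar> \<le> 1 / real (Suc m)" for m x
    unfolding gm_def J_def by (rule simple_approx[OF g(2)]) simp
  show ?thesis
  proof (rule approx_lim[where b = "\<lambda>m n. LINT x|lborel. \<psi> n x * gm m x"
        and c = "\<lambda>m. LINT x|lborel. \<sigma> x * gm m x" and e = "\<lambda>m. 1 / real (Suc m)"])
    fix m
    show "(\<lambda>n. LINT x|lborel. \<psi> n x * gm m x) \<longlonglongrightarrow> (LINT x|lborel. \<sigma> x * gm m x)"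
      unfolding gm_def simple_int(2)[OF \<psi>(1) g(1) fJ] simple_int(2)[OF \<sigma>(1) g(1) fJ]
      by (intro tendsto_sum tendsto_mult_left sets lvl_meas g(1))
  next
    fix m n
    show "\<bar>(LINT x|lborel. \<psi> n x * g x) - (LINT x|lborel. \<psi> n x * gm m x)\<bar> \<le> 1 / real (Suc m)"
    proof (rule approx_err)
      show "integrable lborel (\<lambda>x. \<psi> n x * gm m x)" unfolding gm_def by (rule simple_int(1)[OF \<psi>(1) g(1) fJ])
    qed (use \<psi> err int_bounded[OF \<psi>(1) g' g(2)] in auto)
  next
    fix m
    show "\<bar>(LINT x|lborel. \<sigma> x * g x) - (LINT x|lborel. \<sigma> x * gm m x)\<bar> \<le> 1 / real (Suc m)"
    proof (rule approx_err)
      show "integrable lborel (\<lambda>x. \<sigma> x * gm m x)" unfolding gm_def by (rule simple_int(1)[OF \<sigma>(1) g(1) fJ])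
    qed (use \<sigma> err int_bounded[OF \<sigma>(1) g' g(2)] in auto)
  next
    show "(\<lambda>m. 1 / real (Suc m)) \<longlonglongrightarrow> 0"
      using LIMSEQ_inverse_real_of_nat by (simp add: inverse_eq_divide)
  qed
qed

locale cdseq = dseq +
  assumes conv: "\<And>A. A \<in> sets borel \<Longrightarrow> convergent (\<lambda>n. LINT x|lborel. \<phi> n x * indicator A x)"
begin

definition L :: "'a set \<Rightarrow> real" where
  "L A = lim (\<lambda>n. LINT x|lborel. \<phi> n x * indicator A x)"

lemma L_tend: "A \<in> sets borel \<Longrightarrow> (\<lambda>n. LINT x|lborel. \<phi> n x * indicator A x) \<longlonglongrightarrow> L A"
  unfolding L_def using conv convergent_LIMSEQ_iff by blast

lemma L_nonneg: assumes "A \<in> sets borel" shows "0 \<le> L A"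
  by (rule LIMSEQ_le_const[OF L_tend[OF assms]]) (use ind_le1(1)[OF assms] in auto)

lemma L_UNIV: "L UNIV = 1"
  using L_tend[of UNIV] one by (simp add: LIMSEQ_const_iff)

lemma L_null: assumes "A \<in> null_sets lborel" shows "L A = 0"
proof -
  have "A \<in> sets borel" using assms by auto
  have "(LINT x|lborel. \<phi> n x * indicator A x) = 0" for n
    by (rule integral_eq_zero_AE) (use AE_not_in[OF assms] in \<open>auto simp: indicator_def\<close>)
  then show ?thesis using L_tend[OF \<open>A \<in> sets borel\<close>] by (simp add: LIMSEQ_const_iff)
qed

lemma L_sums:
  fixes A :: "nat \<Rightarrow> 'a set"
  assumes dA: "disjoint_family A" and rA: "range A \<subseteq> sets borel"
  shows "(\<lambda>i. L (A i)) sums L (\<Union>i. A i)"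
proof -
  define T where "T N = (\<Union>i\<in>{N..}. A i)" for N
  have UA: "T N \<in> sets borel" for N
    unfolding T_def using rA by (intro sets.countable_UN') (auto intro: countableI_type)
  have U: "(\<Union>i. A i) \<in> sets borel" using rA by auto
  have split: "L (\<Union>i. A i) = (\<Sum>i<N. L (A i)) + L (T N)" for N
  proof -
    have "(\<lambda>n. LINT x|lborel. \<phi> n x * indicator (\<Union>i. A i) x) \<longlonglongrightarrow> (\<Sum>i<N. L (A i)) + L (T N)"
      unfolding ind_split[OF dA rA, of _ N] T_def[symmetric]
      using rA UA by (intro tendsto_add tendsto_sum L_tend) auto
    then show ?thesis using L_tend[OF U] LIMSEQ_unique by blast
  qed
  have T0: "(\<lambda>N. L (T N)) \<longlonglongrightarrow> 0"
  proof (rule metric_LIMSEQ_I)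
    fix e :: real assume e: "e > 0"
    from tail_small[OF dA rA, of "e/2"] e obtain N0 where
      N0: "\<And>n. (LINT x|lborel. \<phi> n x * indicator (T N0) x) \<le> e / 2" unfolding T_def by auto
    have "dist (L (T N)) 0 < e" if "N \<ge> N0" for N
    proof -
      have sub: "T N \<subseteq> T N0" using that unfolding T_def by (intro UN_mono) auto
      have "(LINT x|lborel. \<phi> n x * indicator (T N) x) \<le> e / 2" for n
      proof -
        have "(LINT x|lborel. \<phi> n x * indicator (T N) x) \<le> (LINT x|lborel. \<phi> n x * indicator (T N0) x)"
          using int_ind[OF UA] nonneg sub by (intro integral_mono) (auto simp: indicator_def)
        then show ?thesis using N0[of n] by linarith
      qed
      then have "L (T N) \<le> e / 2" by (intro LIMSEQ_le_const2[OF L_tend[OF UA]]) auto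
      then show ?thesis using L_nonneg[OF UA] e by simp
    qed
    then show "\<exists>no. \<forall>n\<ge>no. dist (L (T n)) 0 < e" by blast
  qed
  have "(\<lambda>N. L (\<Union>i. A i) - L (T N)) \<longlonglongrightarrow> L (\<Union>i. A i) - 0"
    by (intro tendsto_diff tendsto_const T0)
  moreover have "L (\<Union>i. A i) - L (T N) = (\<Sum>i<N. L (A i))" for N using split[of N] by simp
  ultimately show ?thesis unfolding sums_def by simp
qed

definition \<nu> :: "'a measure" where
  "\<nu> = measure_of UNIV (sets borel) (\<lambda>A. ennreal (L A))"

lemma sets_\<nu>: "sets \<nu> = sets lborel"
  unfolding \<nu>_def using sets.sigma_sets_eq[of borel] by (simp add: sets_measure_of)

lemma emeasure_\<nu>: assumes "A \<in> sets borel" shows "emeasure \<nu> A = ennreal (L A)"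
  unfolding \<nu>_def
proof (rule emeasure_measure_of_sigma)
  show "sigma_algebra UNIV (sets borel)" using sets.sigma_algebra_axioms[of borel] by simp
  show "positive (sets borel) (\<lambda>A. ennreal (L A))"
    unfolding positive_def using L_null[of "{}"] by simp
  show "countably_additive (sets borel) (\<lambda>A. ennreal (L A))"
    unfolding countably_additive_def
  proof (intro allI impI)
    fix A :: "nat \<Rightarrow> 'a set" assume rA: "range A \<subseteq> sets borel" and dA: "disjoint_family A"
      and "(\<Union>i. A i) \<in> sets borel"
    have s: "(\<lambda>i. L (A i)) sums L (\<Union>i. A i)" by (rule L_sums[OF dA rA])
    have "(\<Sum>i. ennreal (L (A i))) = ennreal (\<Sum>i. L (A i))"
      using rA L_nonneg s by (intro suminf_ennreal2) (auto simp: sums_summable)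
    also have "(\<Sum>i. L (A i)) = L (\<Union>i. A i)" using s by (simp add: sums_unique[symmetric])
    finally show "(\<Sum>i. ennreal (L (A i))) = ennreal (L (\<Union>i. A i))" .
  qed
qed (use assms in auto)

lemma ac_\<nu>: "absolutely_continuous lborel \<nu>"
  unfolding absolutely_continuous_def
proof
  fix A :: "'a set" assume A: "A \<in> null_sets lborel"
  then have "A \<in> sets borel" by auto
  then show "A \<in> null_sets \<nu>"
    using emeasure_\<nu> L_null[OF A] sets_\<nu> by (auto simp: null_sets_def)
qed

lemma exists_density:
  "\<exists>\<sigma>. \<sigma> \<in> borel_measurable borel \<and> (\<forall>x. 0 \<le> \<sigma> x) \<and> integrable lborel \<sigma> \<and>
     (\<forall>A\<in>sets borel. (LINT x|lborel. \<sigma> x * indicator A x) = L A)"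
proof -
  obtain f where f: "f \<in> borel_measurable lborel" "density lborel f = \<nu>"
    using sigma_finite_measure.Radon_Nikodym[OF lborel.sigma_finite_measure_axioms ac_\<nu> sets_\<nu>] by blast
  have nnA: "(\<integral>\<^sup>+x. f x * indicator A x \<partial>lborel) = ennreal (L A)" if "A \<in> sets borel" for A
  proof -
    have "ennreal (L A) = emeasure (density lborel f) A" using emeasure_\<nu>[OF that] f(2) by simp
    also have "\<dots> = (\<integral>\<^sup>+x. f x * indicator A x \<partial>lborel)" using f(1) that by (simp add: emeasure_density)
    finally show ?thesis by simp
  qed
  have "(\<integral>\<^sup>+x. f x \<partial>lborel) = 1" using nnA[of UNIV] L_UNIV by simp
  then have fin: "AE x in lborel. f x \<noteq> \<infinity>" using f(1) by (intro nn_integral_PInf_AE) auto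
  define \<sigma> where "\<sigma> x = enn2real (f x)" for x
  have sm: "\<sigma> \<in> borel_measurable borel" using f(1) unfolding \<sigma>_def by simp
  have eq: "(\<integral>\<^sup>+x. ennreal (\<sigma> x * indicator A x) \<partial>lborel) = ennreal (L A)" if "A \<in> sets borel" for A
  proof -
    have "(\<integral>\<^sup>+x. ennreal (\<sigma> x * indicator A x) \<partial>lborel) = (\<integral>\<^sup>+x. f x * indicator A x \<partial>lborel)"
    proof (rule nn_integral_cong_AE)
      show "AE x in lborel. ennreal (\<sigma> x * indicator A x) = f x * indicator A x"
        using fin by eventually_elim (auto simp: \<sigma>_def ennreal_mult' ennreal_indicator ennreal_enn2real top.not_eq_extremum)
    qed
    then show ?thesis using nnA[OF that] by simp
  qed
  have si: "integrable lborel \<sigma>"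
  proof (rule integrableI_nonneg)
    show "\<sigma> \<in> borel_measurable lborel" using sm by simp
    show "AE x in lborel. 0 \<le> \<sigma> x" by (simp add: \<sigma>_def)
    show "(\<integral>\<^sup>+x. ennreal (\<sigma> x) \<partial>lborel) < \<infinity>" using eq[of UNIV] by simp
  qed
  have "(LINT x|lborel. \<sigma> x * indicator A x) = L A" if "A \<in> sets borel" for A
  proof -
    have ii: "integrable lborel (\<lambda>x. \<sigma> x * indicator A x)"
      using that by (intro integrable_real_mult_indicator si) auto
    have "ennreal (LINT x|lborel. \<sigma> x * indicator A x) = (\<integral>\<^sup>+x. ennreal (\<sigma> x * indicator A x) \<partial>lborel)"
      by (rule nn_integral_eq_integral[symmetric, OF ii]) (simp add: \<sigma>_def)
    also have "\<dots> = ennreal (L A)" by (rule eq[OF that])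
    finally show ?thesis using L_nonneg[OF that]
      by (subst (asm) ennreal_inj) (auto simp: \<sigma>_def intro!: integral_nonneg_AE)
  qed
  moreover have "\<forall>x. 0 \<le> \<sigma> x" by (simp add: \<sigma>_def)
  ultimately show ?thesis using sm si by blast
qed

end

lemma int_vec_moment:
  fixes f :: "'a::euclidean_space \<Rightarrow> real"
  assumes f: "f \<in> borel_measurable borel" "\<And>x. 0 \<le> f x" "integrable lborel f"
    "integrable lborel (\<lambda>x. (norm x)\<^sup>2 * f x)"
  shows "integrable lborel (\<lambda>x. f x *\<^sub>R x)"
proof (rule Bochner_Integration.integrable_bound[of _ "\<lambda>x. f x + (norm x)\<^sup>2 * f x"])
  show "integrable lborel (\<lambda>x. f x + (norm x)\<^sup>2 * f x)" using f by auto
  show "(\<lambda>x. f x *\<^sub>R x) \<in> borel_measurable lborel" using f(1) by simp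
  show "AE x in lborel. norm (f x *\<^sub>R x) \<le> norm (f x + (norm x)\<^sup>2 * f x)"
  proof (rule AE_I2)
    fix x :: 'a
    have "0 \<le> (norm x - 1)\<^sup>2" by simp
    moreover have "(norm x - 1)\<^sup>2 = (norm x)\<^sup>2 - 2 * norm x + 1" by (simp add: power2_diff)
    ultimately have "norm x \<le> 1 + (norm x)\<^sup>2" using norm_ge_zero[of x] by linarith
    then have "f x * norm x \<le> f x * (1 + (norm x)\<^sup>2)" using f(2)[of x] by (intro mult_left_mono) auto
    then show "norm (f x *\<^sub>R x) \<le> norm (f x + (norm x)\<^sup>2 * f x)"
      using f(2)[of x] by (simp add: algebra_simps)
  qed
qed

lemma int_comp_moment:
  fixes f :: "'a::euclidean_space \<Rightarrow> real"
  assumes f: "f \<in> borel_measurable borel" "\<And>x. 0 \<le> f x" "integrable lborel f"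
    "integrable lborel (\<lambda>x. (norm x)\<^sup>2 * f x)"
  shows "integrable lborel (\<lambda>x. f x * (x \<bullet> b))"
    "(LINT x|lborel. f x *\<^sub>R x) \<bullet> b = (LINT x|lborel. f x * (x \<bullet> b))"
proof -
  have i: "integrable lborel (\<lambda>x. f x *\<^sub>R x)" by (rule int_vec_moment[OF f])
  show "integrable lborel (\<lambda>x. f x * (x \<bullet> b))"
    using integrable_inner_left[OF i, of b] by simp
  show "(LINT x|lborel. f x *\<^sub>R x) \<bullet> b = (LINT x|lborel. f x * (x \<bullet> b))"
    using integral_inner_left[of b lborel "\<lambda>x. f x *\<^sub>R x"] i by simp
qed

definition clip :: "real \<Rightarrow> real \<Rightarrow> real" where
  "clip m y = max (- m) (min m y)"

lemma clip_err:
  fixes x b :: "'a::euclidean_space"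
  assumes b: "b \<in> Basis" and m: "m > 0"
  shows "\<bar>x \<bullet> b - clip m (x \<bullet> b)\<bar> \<le> (norm x)\<^sup>2 / m"
proof -
  have xb: "\<bar>x \<bullet> b\<bar> \<le> norm x" using b by (simp add: Basis_le_norm)
  show ?thesis
  proof (cases "\<bar>x \<bullet> b\<bar> \<le> m")
    case True
    then have "clip m (x \<bullet> b) = x \<bullet> b" by (auto simp: clip_def)
    then show ?thesis using m by simp
  next
    case False
    then have "\<bar>x \<bullet> b - clip m (x \<bullet> b)\<bar> \<le> \<bar>x \<bullet> b\<bar>" using m unfolding clip_def by (auto simp: max_def min_def abs_if)
    also have "\<bar>x \<bullet> b\<bar> \<le> \<bar>x \<bullet> b\<bar>\<^sup>2 / m"
    proof -
      have "\<bar>x \<bullet> b\<bar> * m \<le> \<bar>x \<bullet> b\<bar> * \<bar>x \<bullet> b\<bar>" using False by (intro mult_left_mono) auto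
      then show ?thesis using m by (simp add: le_divide_eq power2_eq_square)
    qed
    also have "\<dots> \<le> (norm x)\<^sup>2 / m" using xb m by (intro divide_right_mono power_mono) auto
    finally show ?thesis .
  qed
qed

lemma clip_bounded: "m \<ge> 0 \<Longrightarrow> \<bar>clip m y\<bar> \<le> m"
  by (auto simp: clip_def)

lemma moment_err:
  fixes f :: "'a::euclidean_space \<Rightarrow> real"
  assumes f: "f \<in> borel_measurable borel" "\<And>x. 0 \<le> f x" "integrable lborel f"
    "integrable lborel (\<lambda>x. (norm x)\<^sup>2 * f x)" "(LINT x|lborel. (norm x)\<^sup>2 * f x) \<le> C"
    and b: "b \<in> Basis" and m: "m > 0"
  shows "\<bar>(LINT x|lborel. f x * (x \<bullet> b)) - (LINT x|lborel. f x * clip m (x \<bullet> b))\<bar> \<le> C / m"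
proof -
  have i1: "integrable lborel (\<lambda>x. f x * (x \<bullet> b))" by (rule int_comp_moment(1)[OF f(1-4)])
  have i2: "integrable lborel (\<lambda>x. f x * clip m (x \<bullet> b))"
    using f(3) m by (intro int_bounded[where B = m] clip_bounded) (auto simp: clip_def)
  have "\<bar>(LINT x|lborel. f x * (x \<bullet> b)) - (LINT x|lborel. f x * clip m (x \<bullet> b))\<bar> =
     norm (LINT x|lborel. f x * (x \<bullet> b) - f x * clip m (x \<bullet> b))"
    using i1 i2 by (simp add: Bochner_Integration.integral_diff)
  also have "\<dots> \<le> (LINT x|lborel. norm (f x * (x \<bullet> b) - f x * clip m (x \<bullet> b)))" by (rule integral_norm_bound)
  also have "\<dots> \<le> (LINT x|lborel. (norm x)\<^sup>2 * f x / m)"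
  proof (rule integral_mono)
    show "integrable lborel (\<lambda>x. norm (f x * (x \<bullet> b) - f x * clip m (x \<bullet> b)))" using i1 i2 by auto
    show "integrable lborel (\<lambda>x. (norm x)\<^sup>2 * f x / m)" using f(4) by auto
    fix x :: 'a
    have "norm (f x * (x \<bullet> b) - f x * clip m (x \<bullet> b)) = f x * \<bar>x \<bullet> b - clip m (x \<bullet> b)\<bar>"
      using f(2)[of x] by (simp add: abs_mult right_diff_distrib[symmetric])
    also have "\<dots> \<le> f x * ((norm x)\<^sup>2 / m)" using f(2)[of x] clip_err[OF b m] by (intro mult_left_mono) auto
    finally show "norm (f x * (x \<bullet> b) - f x * clip m (x \<bullet> b)) \<le> (norm x)\<^sup>2 * f x / m" by (simp add: mult.commute)
  qed
  also have "\<dots> = (LINT x|lborel. (norm x)\<^sup>2 * f x) / m" by simp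
  also have "\<dots> \<le> C / m" using f(5) m by (simp add: divide_right_mono)
  finally show ?thesis .
qed

theorem (in dseq) compact:
  "\<exists>s \<sigma>. strict_mono s \<and> \<sigma> \<in> borel_measurable borel \<and> (\<forall>x. 0 \<le> \<sigma> x) \<and> integrable lborel \<sigma> \<and>
     (LINT x|lborel. \<sigma> x) = 1 \<and> integrable lborel (\<lambda>x. (norm x)\<^sup>2 * \<sigma> x) \<and>
     (\<forall>g. g \<in> borel_measurable lborel \<and> bounded (range g) \<longrightarrow>
        (\<lambda>n. LINT x|lborel. \<phi> (s n) x * g x) \<longlonglongrightarrow> (LINT x|lborel. \<sigma> x * g x)) \<and>
     ((\<lambda>n. LINT x|lborel. \<phi> (s n) x *\<^sub>R x) \<longlonglongrightarrow> (LINT x|lborel. \<sigma> x *\<^sub>R x))"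
proof -
  obtain s where s: "strict_mono s"
    "\<And>A. A \<in> sets borel \<Longrightarrow> convergent (\<lambda>n. LINT x|lborel. \<phi> (s n) x * indicator A x)"
    using exists_conv_sets by blast
  interpret c: cdseq "\<phi> \<circ> s" Q M
  proof (rule cdseq.intro[OF subseq])
    show "cdseq_axioms (\<phi> \<circ> s)" by unfold_locales (use s(2) in auto)
  qed
  obtain \<sigma> where \<sigma>: "\<sigma> \<in> borel_measurable borel" "\<And>x. 0 \<le> \<sigma> x" "integrable lborel \<sigma>"
    "\<And>A. A \<in> sets borel \<Longrightarrow> (LINT x|lborel. \<sigma> x * indicator A x) = c.L A"
    using c.exists_density by blast
  have \<sigma>1: "(LINT x|lborel. \<sigma> x) = 1" using \<sigma>(4)[of UNIV] c.L_UNIV by simp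
  have sets_tend: "(\<lambda>n. LINT x|lborel. \<phi> (s n) x * indicator A x) \<longlonglongrightarrow> (LINT x|lborel. \<sigma> x * indicator A x)"
    if "A \<in> sets borel" for A
    using c.L_tend[OF that] \<sigma>(4)[OF that] by simp
  have weak: "(\<lambda>n. LINT x|lborel. \<phi> (s n) x * g x) \<longlonglongrightarrow> (LINT x|lborel. \<sigma> x * g x)"
    if g: "g \<in> borel_measurable borel" "\<And>x. \<bar>g x\<bar> \<le> B" for g B
    using weak_from_sets[of "\<phi> \<circ> s" \<sigma> g B] int nonneg one \<sigma> \<sigma>1 sets_tend g by simp
  have weak': "(\<lambda>n. LINT x|lborel. \<phi> (s n) x * g x) \<longlonglongrightarrow> (LINT x|lborel. \<sigma> x * g x)"
    if g: "g \<in> borel_measurable lborel" "bounded (range g)" for g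
  proof -
    obtain B where "\<forall>y\<in>range g. \<bar>y\<bar> \<le> B" using g(2) unfolding bounded_real by blast
    then have gB: "\<And>x. \<bar>g x\<bar> \<le> B" by auto
    have "g \<in> borel_measurable borel" using g(1) by simp
    then show ?thesis by (rule weak[OF _ gB])
  qed
  define gr where "gr r x = min ((norm x)\<^sup>2) (real r)" for r :: nat and x :: 'a
  have gr_meas: "gr r \<in> borel_measurable borel" for r
    unfolding gr_def by (intro borel_measurable_continuous_onI continuous_intros)
  have gr_b: "\<bar>gr r x\<bar> \<le> real r" for r x by (simp add: gr_def)
  have gr_le: "(LINT x|lborel. \<sigma> x * gr r x) \<le> M" for r
  proof (rule LIMSEQ_le_const2[OF weak[OF gr_meas gr_b]], intro exI allI impI)
    fix n
    have "(LINT x|lborel. \<phi> (s n) x * gr r x) \<le> (LINT x|lborel. (norm x)\<^sup>2 * \<phi> (s n) x)"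
    proof (rule integral_mono)
      show "integrable lborel (\<lambda>x. \<phi> (s n) x * gr r x)"
        using gr_meas gr_b int by (intro int_bounded) auto
      show "integrable lborel (\<lambda>x. (norm x)\<^sup>2 * \<phi> (s n) x)" by (rule momi)
      fix x show "\<phi> (s n) x * gr r x \<le> (norm x)\<^sup>2 * \<phi> (s n) x"
        using nonneg[of "s n" x] by (simp add: gr_def mult.commute mult_left_mono)
    qed
    then show "(LINT x|lborel. \<phi> (s n) x * gr r x) \<le> M" using momb[of "s n"] by linarith
  qed
  have gri: "integrable lborel (\<lambda>x. \<sigma> x * gr r x)" for r
    using gr_meas gr_b \<sigma>(3) by (intro int_bounded) auto
  have inc: "incseq (\<lambda>r. LINT x|lborel. \<sigma> x * gr r x)"
  proof (rule incseq_SucI)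
    fix r show "(LINT x|lborel. \<sigma> x * gr r x) \<le> (LINT x|lborel. \<sigma> x * gr (Suc r) x)"
      using gri[of r] gri[of "Suc r"] \<sigma>(2) by (intro integral_mono) (auto simp: gr_def intro!: mult_left_mono simp del: of_nat_Suc)
  qed
  have sm: "integrable lborel (\<lambda>x. (norm x)\<^sup>2 * \<sigma> x)"
  proof (rule integrable_monotone_convergence[where f = "\<lambda>r x. \<sigma> x * gr r x"])
    show "\<And>r. integrable lborel (\<lambda>x. \<sigma> x * gr r x)" by (rule gri)
    show "AE x in lborel. incseq (\<lambda>r. \<sigma> x * gr r x)"
      using \<sigma>(2) by (intro AE_I2 incseq_SucI) (auto simp: gr_def intro!: mult_left_mono)
    show "AE x in lborel. (\<lambda>r. \<sigma> x * gr r x) \<longlonglongrightarrow> (norm x)\<^sup>2 * \<sigma> x"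
    proof (rule AE_I2)
      fix x :: 'a
      obtain N where N: "(norm x)\<^sup>2 \<le> real N" using real_arch_simple by blast
      have "eventually (\<lambda>r. \<sigma> x * gr r x = (norm x)\<^sup>2 * \<sigma> x) sequentially"
        unfolding eventually_sequentially
        by (rule exI[of _ N]) (use N in \<open>auto simp: gr_def min_def\<close>)
      then show "(\<lambda>r. \<sigma> x * gr r x) \<longlonglongrightarrow> (norm x)\<^sup>2 * \<sigma> x" by (rule tendsto_eventually)
    qed
    show "(\<lambda>r. LINT x|lborel. \<sigma> x * gr r x) \<longlonglongrightarrow> Sup (range (\<lambda>r. LINT x|lborel. \<sigma> x * gr r x))"
      using inc gr_le by (intro LIMSEQ_incseq_SUP) (auto simp: bdd_above_def)
    show "(\<lambda>x. (norm x)\<^sup>2 * \<sigma> x) \<in> borel_measurable lborel" using \<sigma>(1) by simp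
  qed
  define M\<sigma> where "M\<sigma> = (LINT x|lborel. (norm x)\<^sup>2 * \<sigma> x)"
  define C where "C = max M M\<sigma>"
  have comp: "(\<lambda>n. LINT x|lborel. \<phi> (s n) x * (x \<bullet> b)) \<longlonglongrightarrow> (LINT x|lborel. \<sigma> x * (x \<bullet> b))"
    if b: "b \<in> Basis" for b
  proof (rule approx_lim[where b = "\<lambda>k n. LINT x|lborel. \<phi> (s n) x * clip (real (Suc k)) (x \<bullet> b)"
        and c = "\<lambda>k. LINT x|lborel. \<sigma> x * clip (real (Suc k)) (x \<bullet> b)" and e = "\<lambda>k. C / real (Suc k)"])
    fix k
    have cm: "(\<lambda>x. clip (real (Suc k)) (x \<bullet> b)) \<in> borel_measurable borel"
      unfolding clip_def by (intro borel_measurable_continuous_onI continuous_intros)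
    show "(\<lambda>n. LINT x|lborel. \<phi> (s n) x * clip (real (Suc k)) (x \<bullet> b)) \<longlonglongrightarrow> (LINT x|lborel. \<sigma> x * clip (real (Suc k)) (x \<bullet> b))"
      by (rule weak[OF cm clip_bounded]) simp
  next
    fix k n
    have "\<bar>(LINT x|lborel. \<phi> (s n) x * (x \<bullet> b)) - (LINT x|lborel. \<phi> (s n) x * clip (real (Suc k)) (x \<bullet> b))\<bar> \<le> M / real (Suc k)"
      by (rule moment_err[OF meas nonneg int momi momb b]) simp
    also have "\<dots> \<le> C / real (Suc k)" by (simp add: C_def divide_right_mono)
    finally show "\<bar>(LINT x|lborel. \<phi> (s n) x * (x \<bullet> b)) - (LINT x|lborel. \<phi> (s n) x * clip (real (Suc k)) (x \<bullet> b))\<bar> \<le> C / real (Suc k)" .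
  next
    fix k
    have "\<bar>(LINT x|lborel. \<sigma> x * (x \<bullet> b)) - (LINT x|lborel. \<sigma> x * clip (real (Suc k)) (x \<bullet> b))\<bar> \<le> M\<sigma> / real (Suc k)"
      by (rule moment_err[OF \<sigma>(1,2,3) sm _ b]) (simp_all add: M\<sigma>_def)
    also have "\<dots> \<le> C / real (Suc k)" by (simp add: C_def divide_right_mono)
    finally show "\<bar>(LINT x|lborel. \<sigma> x * (x \<bullet> b)) - (LINT x|lborel. \<sigma> x * clip (real (Suc k)) (x \<bullet> b))\<bar> \<le> C / real (Suc k)" .
  next
    have "(\<lambda>k. C * inverse (real (Suc k))) \<longlonglongrightarrow> C * 0"
      by (intro tendsto_mult tendsto_const LIMSEQ_inverse_real_of_nat)
    then show "(\<lambda>k. C / real (Suc k)) \<longlonglongrightarrow> 0" by (simp add: divide_inverse)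
  qed
  have vec: "(\<lambda>n. LINT x|lborel. \<phi> (s n) x *\<^sub>R x) \<longlonglongrightarrow> (LINT x|lborel. \<sigma> x *\<^sub>R x)"
  proof -
    have e1: "(LINT x|lborel. \<phi> (s n) x *\<^sub>R x) = (\<Sum>b\<in>Basis. (LINT x|lborel. \<phi> (s n) x * (x \<bullet> b)) *\<^sub>R b)" for n
      by (subst euclidean_representation[symmetric]) (simp add: int_comp_moment(2)[OF meas nonneg int momi])
    have e2: "(LINT x|lborel. \<sigma> x *\<^sub>R x) = (\<Sum>b\<in>Basis. (LINT x|lborel. \<sigma> x * (x \<bullet> b)) *\<^sub>R b)"
      by (subst euclidean_representation[symmetric]) (simp add: int_comp_moment(2)[OF \<sigma>(1,2,3) sm])
    show ?thesis unfolding e1 e2 by (intro tendsto_sum tendsto_scaleR tendsto_const comp)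
  qed
  show ?thesis using s(1) \<sigma>(1,2,3) \<sigma>1 sm weak' vec by blast
qed

lemma incr_lemma:
  fixes f f' :: "real \<Rightarrow> real"
  assumes ab: "a \<le> b" and d: "\<And>x. x \<in> {a..b} \<Longrightarrow> (f has_real_derivative f' x) (at x within {a..b})"
    and nn: "\<And>x. a < x \<Longrightarrow> x < b \<Longrightarrow> 0 \<le> f' x"
  shows "f a \<le> f b"
proof (rule DERIV_nonneg_imp_increasing_open[OF ab])
  fix x assume x: "a < x" "x < b"
  then have "x \<in> interior {a..b}" by auto
  then have "at x within {a..b} = at x" by (rule at_within_interior)
  then show "\<exists>y. DERIV f x :> y \<and> 0 \<le> y" using d[of x] nn[OF x] x by auto
next
  show "continuous_on {a..b} f" by (rule DERIV_continuous_on[OF d])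
qed

lemma line_deriv:
  fixes f :: "'a::real_normed_vector \<Rightarrow> real"
  assumes "(f has_derivative f') (at (t *\<^sub>R z))"
  shows "((\<lambda>s. f (s *\<^sub>R z)) has_real_derivative f' z) (at t within S)"
proof -
  have lin: "linear f'" using has_derivative_linear[OF assms] .
  have "((\<lambda>s. s *\<^sub>R z) has_derivative (\<lambda>h. h *\<^sub>R z)) (at t within S)"
    by (auto intro!: derivative_eq_intros)
  from has_derivative_compose[OF this assms]
  have "((\<lambda>s. f (s *\<^sub>R z)) has_derivative (\<lambda>h. f' (h *\<^sub>R z))) (at t within S)" .
  moreover have "(\<lambda>h. f' (h *\<^sub>R z)) = (*) (f' z)"
    using linear_scale[OF lin] by (auto simp: mult.commute)
  ultimately show ?thesis by (simp add: has_field_derivative_def)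
qed

lemma K_quad:
  fixes K :: "'a::euclidean_space \<Rightarrow> real" and gK :: "'a \<Rightarrow> 'a" and HK :: "'a \<Rightarrow> 'a \<Rightarrow>\<^sub>L 'a"
  assumes K_nonneg: "\<forall>x. 0 \<le> K x"
    and K_zero: "K 0 = 0"
    and K_grad: "\<forall>x. (K has_derivative (\<lambda>v. gK x \<bullet> v)) (at x)"
    and K_hess: "\<forall>x. (gK has_derivative blinfun_apply (HK x)) (at x)"
    and K_convex: "\<forall>x v. v \<bullet> blinfun_apply (HK x) v \<ge> lam * (norm v)\<^sup>2"
    and K_bound: "\<forall>x. norm (HK x) \<le> CK"
  shows "lam / 2 * (norm z)\<^sup>2 \<le> K z" "K z \<le> CK / 2 * (norm z)\<^sup>2"
proof -
  have "(\<lambda>v. gK 0 \<bullet> v) = (\<lambda>h. 0)"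
    by (rule has_derivative_local_min[OF K_grad[rule_format]]) (simp add: K_nonneg K_zero)
  then have "gK 0 \<bullet> gK 0 = 0" using fun_cong[of "\<lambda>v. gK 0 \<bullet> v" "\<lambda>h. 0" "gK 0"] by simp
  then have g0: "gK 0 = 0" by simp
  define \<phi> where "\<phi> s = K (s *\<^sub>R z)" for s
  define \<psi> where "\<psi> s = gK (s *\<^sub>R z) \<bullet> z" for s
  have d\<phi>: "(\<phi> has_real_derivative \<psi> s) (at s within S)" for s S
    unfolding \<phi>_def \<psi>_def using line_deriv[OF K_grad[rule_format, of "s *\<^sub>R z"]] by simp
  have d\<psi>: "(\<psi> has_real_derivative (blinfun_apply (HK (s *\<^sub>R z)) z \<bullet> z)) (at s within S)" for s S
    unfolding \<psi>_def
    by (rule line_deriv[where f = "\<lambda>v. gK v \<bullet> z", OF has_derivative_inner_left[OF K_hess[rule_format]]])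
  have Hl: "lam * (norm z)\<^sup>2 \<le> blinfun_apply (HK x) z \<bullet> z" for x
  proof -
    have "lam * (norm z)\<^sup>2 \<le> z \<bullet> blinfun_apply (HK x) z" using K_convex by blast
    moreover have "blinfun_apply (HK x) z \<bullet> z = z \<bullet> blinfun_apply (HK x) z" by (rule inner_commute)
    ultimately show ?thesis by simp
  qed
  have Hu: "blinfun_apply (HK x) z \<bullet> z \<le> CK * (norm z)\<^sup>2" for x
  proof -
    have "blinfun_apply (HK x) z \<bullet> z \<le> norm (blinfun_apply (HK x) z) * norm z" by (rule norm_cauchy_schwarz)
    also have "\<dots> \<le> norm (HK x) * norm z * norm z" by (intro mult_right_mono norm_blinfun) auto
    also have "\<dots> \<le> CK * norm z * norm z" using K_bound by (intro mult_right_mono) auto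
    finally show ?thesis by (simp add: power2_eq_square mult.assoc)
  qed
  have \<psi>0: "\<psi> 0 = 0" by (simp add: \<psi>_def g0)
  have \<phi>0: "\<phi> 0 = 0" by (simp add: \<phi>_def K_zero)
  have dlin: "((\<lambda>s. c * s) has_real_derivative c) (at s within S)" for c s S
    using DERIV_cmult[OF DERIV_ident, of c s S] by simp
  have dsq: "((\<lambda>s. c / 2 * s\<^sup>2) has_real_derivative c * s) (at s within S)" for c s S
    using DERIV_cmult[OF DERIV_pow[of 2 s S], of "c/2"] by simp
  have low: "lam * (norm z)\<^sup>2 * t \<le> \<psi> t" if "0 \<le> t" for t
  proof -
    have "(\<lambda>s. \<psi> s - lam * (norm z)\<^sup>2 * s) 0 \<le> (\<lambda>s. \<psi> s - lam * (norm z)\<^sup>2 * s) t"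
      by (rule incr_lemma[OF that, where f = "\<lambda>s. \<psi> s - lam * (norm z)\<^sup>2 * s" and f' = "\<lambda>s. blinfun_apply (HK (s *\<^sub>R z)) z \<bullet> z - lam * (norm z)\<^sup>2"])
         (auto intro!: DERIV_diff d\<psi> dlin simp: Hl)
    then show ?thesis using \<psi>0 by simp
  qed
  have "(\<lambda>s. \<phi> s - lam * (norm z)\<^sup>2 / 2 * s\<^sup>2) 0 \<le> (\<lambda>s. \<phi> s - lam * (norm z)\<^sup>2 / 2 * s\<^sup>2) 1"
    by (rule incr_lemma[where f = "\<lambda>s. \<phi> s - lam * (norm z)\<^sup>2 / 2 * s\<^sup>2" and f' = "\<lambda>s. \<psi> s - lam * (norm z)\<^sup>2 * s"])
       (auto intro!: DERIV_diff d\<phi> dsq simp del: times_divide_eq_left simp: low)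
  then show "lam / 2 * (norm z)\<^sup>2 \<le> K z" using \<phi>0 by (simp add: \<phi>_def)
  have up: "\<psi> t \<le> CK * (norm z)\<^sup>2 * t" if "0 \<le> t" for t
  proof -
    have "(\<lambda>s. CK * (norm z)\<^sup>2 * s - \<psi> s) 0 \<le> (\<lambda>s. CK * (norm z)\<^sup>2 * s - \<psi> s) t"
      by (rule incr_lemma[OF that, where f = "\<lambda>s. CK * (norm z)\<^sup>2 * s - \<psi> s" and f' = "\<lambda>s. CK * (norm z)\<^sup>2 - blinfun_apply (HK (s *\<^sub>R z)) z \<bullet> z"])
         (auto intro!: DERIV_diff d\<psi> dlin simp: Hu)
    then show ?thesis using \<psi>0 by simp
  qed
  have "(\<lambda>s. CK * (norm z)\<^sup>2 / 2 * s\<^sup>2 - \<phi> s) 0 \<le> (\<lambda>s. CK * (norm z)\<^sup>2 / 2 * s\<^sup>2 - \<phi> s) 1"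
    by (rule incr_lemma[where f = "\<lambda>s. CK * (norm z)\<^sup>2 / 2 * s\<^sup>2 - \<phi> s" and f' = "\<lambda>s. CK * (norm z)\<^sup>2 * s - \<psi> s"])
       (auto intro!: DERIV_diff d\<phi> dsq simp del: times_divide_eq_left simp: up)
  then show "K z \<le> CK / 2 * (norm z)\<^sup>2" using \<phi>0 by (simp add: \<phi>_def)
qed

lemma dsqR: "((\<lambda>s. c / 2 * (s - R)\<^sup>2) has_real_derivative c * (x - R)) (at x within S)"
  by (rule derivative_eq_intros refl | simp)+

lemma dsqR': "((\<lambda>s. c * (s - R)\<^sup>2 / 2) has_real_derivative c * (x - R)) (at x within S)"
  using dsqR[of c R x S] by simp

lemma F_props:
  assumes "hypF F F' F''"
  shows "\<And>r. 0 \<le> r \<Longrightarrow> 0 \<le> F r" "continuous_on {0..} F"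
    "\<exists>a b. 0 \<le> b \<and> (\<forall>r\<ge>0. r\<^sup>2 \<le> a * r + b * F r)"
proof -
  have F0: "\<And>r. 0 \<le> r \<Longrightarrow> 0 \<le> F r"
    and dF: "\<And>r. 0 \<le> r \<Longrightarrow> (F has_real_derivative F' r) (at r within {0..})"
    and dF': "\<And>r. 0 \<le> r \<Longrightarrow> (F' has_real_derivative F'' r) (at r within {0..})"
    and pos: "\<And>r. 0 < r \<Longrightarrow> F'' r > 0"
    and F'0: "F' 0 = 0"
    and lim: "Liminf at_top (\<lambda>r. ereal (F'' r)) > 0"
    using assms unfolding hypF_def by auto
  show "\<And>r. 0 \<le> r \<Longrightarrow> 0 \<le> F r" by (rule F0)
  show "continuous_on {0..} F" by (rule DERIV_continuous_on) (use dF in auto)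
  have dFs: "(F has_real_derivative F' x) (at x within {a..b})" if "0 \<le> a" "x \<in> {a..b}" for a b x
    using DERIV_subset[OF dF[of x]] that by auto
  have dF's: "(F' has_real_derivative F'' x) (at x within {a..b})" if "0 \<le> a" "x \<in> {a..b}" for a b x
    using DERIV_subset[OF dF'[of x]] that by auto
  obtain c0 where c0: "0 < ereal c0" "ereal c0 < Liminf at_top (\<lambda>r. ereal (F'' r))"
    using ereal_dense2[OF lim] by blast
  from less_LiminfD[OF c0(2)] obtain R0 where R0: "\<And>r. r \<ge> R0 \<Longrightarrow> c0 < F'' r"
    unfolding eventually_at_top_linorder by auto
  define R where "R = max R0 1"
  have R: "R \<ge> 1" "\<And>r. r \<ge> R \<Longrightarrow> c0 < F'' r" using R0 by (auto simp: R_def)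
  have c0p: "c0 > 0" using c0(1) by simp
  have F'mono: "F' a \<le> F' b" if "0 \<le> a" "a \<le> b" for a b
    by (rule incr_lemma[OF that(2), where f' = F'']) (use that dF's pos in \<open>auto intro: less_imp_le\<close>)
  have F'R: "0 \<le> F' R" using F'mono[of 0 R] R F'0 by simp
  have F'lin: "c0 * (x - R) \<le> F' x" if "x \<ge> R" for x
  proof -
    have "(\<lambda>s. F' s - c0 * s) R \<le> (\<lambda>s. F' s - c0 * s) x"
      by (rule incr_lemma[OF that, where f = "\<lambda>s. F' s - c0 * s" and f' = "\<lambda>s. F'' s - c0"])
         (use R(1) in \<open>auto intro!: DERIV_diff dF's derivative_eq_intros less_imp_le R(2)\<close>)
    then show ?thesis using F'R by (simp add: algebra_simps)
  qed
  have Fq: "c0 / 2 * (x - R)\<^sup>2 \<le> F x" if "x \<ge> R" for x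
  proof -
    have "(\<lambda>s. F s - c0 / 2 * (s - R)\<^sup>2) R \<le> (\<lambda>s. F s - c0 / 2 * (s - R)\<^sup>2) x"
      by (rule incr_lemma[OF that, where f = "\<lambda>s. F s - c0 / 2 * (s - R)\<^sup>2" and f' = "\<lambda>s. F' s - c0 * (s - R)"])
         (use R(1) F'lin in \<open>auto intro!: DERIV_diff dFs dsqR dsqR'\<close>)
    then show ?thesis using F0[of R] R(1) by simp
  qed
  have "r\<^sup>2 \<le> 2 * R * r + 8 / c0 * F r" if r: "r \<ge> 0" for r
  proof (cases "r \<le> 2 * R")
    case True
    then have "r\<^sup>2 \<le> 2 * R * r" using r by (simp add: power2_eq_square mult_right_mono)
    moreover have "0 \<le> 8 / c0 * F r" using F0[OF r] c0p by simp
    ultimately show ?thesis by linarith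
  next
    case False
    then have "r / 2 \<le> r - R" by simp
    then have "(r / 2)\<^sup>2 \<le> (r - R)\<^sup>2" using r by (intro power_mono) auto
    then have "c0 / 2 * (r / 2)\<^sup>2 \<le> F r" using Fq[of r] False R(1) c0p
      by (smt (verit) mult_left_mono zero_le_divide_iff)
    then have "r\<^sup>2 \<le> 8 / c0 * F r" using c0p by (simp add: field_simps power2_eq_square)
    moreover have "0 \<le> 2 * R * r" using R(1) r by simp
    ultimately show ?thesis by linarith
  qed
  then show "\<exists>a b. 0 \<le> b \<and> (\<forall>r\<ge>0. r\<^sup>2 \<le> a * r + b * F r)" using c0p
    by (intro exI[of _ "2 * R"] exI[of _ "8 / c0"]) auto
qed

lemma G_nonneg:
  assumes F1: "hypF F1 F1' F1''" and F2: "hypF F2 F2' F2''"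
    and h_d1: "\<forall>p\<in>quadrant. (h has_derivative (\<lambda>v. h1 p * fst v + h2 p * snd v)) (at p within quadrant)"
    and h_axes: "\<forall>p\<in>quadrant. fst p = 0 \<or> snd p = 0 \<longrightarrow> h p = 0 \<and> h1 p = 0 \<and> h2 p = 0"
    and cvx: "convex_on quadrant (\<lambda>r. F1 (fst r) + F2 (snd r) + 2 * \<epsilon>0 * h r)"
    and p: "p \<in> quadrant"
  shows "0 \<le> F1 (fst p) + F2 (snd p) + 2 * \<epsilon>0 * h p"
proof -
  define G where "G r = F1 (fst r) + F2 (snd r) + 2 * \<epsilon>0 * h r" for r :: "real \<times> real"
  have q0: "(0::real\<times>real) \<in> quadrant" by (simp add: quadrant_def zero_prod_def)
  have F1d: "(F1 has_real_derivative F1' 0) (at 0 within {0..})" and F10: "F1 0 = 0" "F1' 0 = 0"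
    using F1 unfolding hypF_def by auto
  have F2d: "(F2 has_real_derivative F2' 0) (at 0 within {0..})" and F20: "F2 0 = 0" "F2' 0 = 0"
    using F2 unfolding hypF_def by auto
  have h0: "h 0 = 0" "h1 0 = 0" "h2 0 = 0" using h_axes q0 by (auto simp: zero_prod_def)
  have G0: "G 0 = 0" using F10 F20 h0 by (simp add: G_def zero_prod_def)
  have sub1: "fst ` quadrant \<subseteq> {0..}" and sub2: "snd ` quadrant \<subseteq> {0..}" by (auto simp: quadrant_def)
  have d1: "((\<lambda>r. F1 (fst r)) has_derivative (\<lambda>v. F1' 0 * fst v)) (at 0 within quadrant)"
  proof (rule has_derivative_in_compose[where f = fst and g = F1 and f' = fst and g' = "(*) (F1' 0)", simplified])
    show "(fst has_derivative fst) (at 0 within quadrant)" by (rule has_derivative_fst[OF has_derivative_ident])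
    show "(F1 has_derivative (*) (F1' 0)) (at (fst 0) within fst ` quadrant)"
      using has_derivative_subset[OF F1d[unfolded has_field_derivative_def] sub1] by (simp add: zero_prod_def)
  qed
  have d2: "((\<lambda>r. F2 (snd r)) has_derivative (\<lambda>v. F2' 0 * snd v)) (at 0 within quadrant)"
  proof (rule has_derivative_in_compose[where f = snd and g = F2 and f' = snd and g' = "(*) (F2' 0)", simplified])
    show "(snd has_derivative snd) (at 0 within quadrant)" by (rule has_derivative_snd[OF has_derivative_ident])
    show "(F2 has_derivative (*) (F2' 0)) (at (snd 0) within snd ` quadrant)"
      using has_derivative_subset[OF F2d[unfolded has_field_derivative_def] sub2] by (simp add: zero_prod_def)
  qed
  have d3: "(h has_derivative (\<lambda>v. h1 0 * fst v + h2 0 * snd v)) (at 0 within quadrant)"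
    using h_d1 q0 by auto
  have dG: "(G has_derivative (\<lambda>v. 0)) (at 0 within quadrant)"
  proof -
    have "(G has_derivative (\<lambda>v. F1' 0 * fst v + F2' 0 * snd v + 2 * \<epsilon>0 * (h1 0 * fst v + h2 0 * snd v))) (at 0 within quadrant)"
      unfolding G_def by (intro has_derivative_add has_derivative_mult_right d1 d2 d3)
    then show ?thesis using F10 F20 h0 by simp
  qed
  define g where "g t = G (t *\<^sub>R p)" for t :: real
  have img: "(\<lambda>t. t *\<^sub>R p) ` {0..} \<subseteq> quadrant" using p by (auto simp: quadrant_def)
  have dg: "(g has_derivative (\<lambda>t. 0)) (at 0 within {0..})"
  proof -
    have "((\<lambda>t. t *\<^sub>R p) has_derivative (\<lambda>t. t *\<^sub>R p)) (at 0 within {0..})"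
      by (auto intro!: derivative_eq_intros)
    moreover have "(G has_derivative (\<lambda>v. 0)) (at (0 *\<^sub>R p) within (\<lambda>t. t *\<^sub>R p) ` {0..})"
      using has_derivative_subset[OF dG img] by simp
    ultimately show ?thesis unfolding g_def by (rule has_derivative_in_compose)
  qed
  moreover have "(*) (0::real) = (\<lambda>t. 0)" by auto
  ultimately have "(g has_real_derivative 0) (at 0 within {0..})" by (simp add: has_field_derivative_def)
  then have lim: "((\<lambda>y. (g y - g 0) / (y - 0)) \<longlongrightarrow> 0) (at_right 0)"
    unfolding has_field_derivative_iff by (simp add: at_within_Ici_at_right)
  have ev: "eventually (\<lambda>y. (g y - g 0) / (y - 0) \<le> G p) (at_right 0)"
    unfolding eventually_at_right[OF zero_less_one]
  proof (intro exI[of _ 1] conjI allI impI)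
    fix y :: real assume y: "0 < y" "y < 1"
    have "g y = G ((1 - y) *\<^sub>R 0 + y *\<^sub>R p)" by (simp add: g_def)
    also have "\<dots> \<le> (1 - y) * G 0 + y * G p"
      using convex_onD[OF cvx[folded G_def], of y 0 p] y q0 p by simp
    finally have "g y \<le> y * G p" using G0 by simp
    moreover have "g 0 = 0" using G0 by (simp add: g_def)
    ultimately show "(g y - g 0) / (y - 0) \<le> G p" using y by (simp add: divide_le_eq mult.commute)
  qed simp
  have "0 \<le> G p" by (rule tendsto_upperbound[OF lim ev trivial_limit_at_right_real])
  then show ?thesis by (simp add: G_def)
qed

lemma W_half:
  assumes F1: "hypF F1 F1' F1''" and F2: "hypF F2 F2' F2''"
    and h_d1: "\<forall>p\<in>quadrant. (h has_derivative (\<lambda>v. h1 p * fst v + h2 p * snd v)) (at p within quadrant)"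
    and h_axes: "\<forall>p\<in>quadrant. fst p = 0 \<or> snd p = 0 \<longrightarrow> h p = 0 \<and> h1 p = 0 \<and> h2 p = 0"
    and eps0: "\<epsilon>0 > 0"
    and cvx: "convex_on quadrant (\<lambda>r. F1 (fst r) + F2 (snd r) + 2 * \<epsilon>0 * h r)"
    and eps: "0 < \<epsilon>" "\<epsilon> \<le> \<epsilon>0"
    and p: "p \<in> quadrant"
  shows "(F1 (fst p) + F2 (snd p)) / 2 \<le> F1 (fst p) + F2 (snd p) + \<epsilon> * h p"
proof -
  have G: "0 \<le> F1 (fst p) + F2 (snd p) + 2 * \<epsilon>0 * h p" by (rule G_nonneg[OF F1 F2 h_d1 h_axes cvx p])
  have S: "0 \<le> F1 (fst p) + F2 (snd p)"
    using F_props(1)[OF F1, of "fst p"] F_props(1)[OF F2, of "snd p"] p by (auto simp: quadrant_def)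
  define l where "l = \<epsilon> / (2 * \<epsilon>0)"
  have l: "0 < l" "l \<le> 1 / 2" using eps eps0 by (auto simp: l_def field_simps)
  define X where "X = l * (F1 (fst p) + F2 (snd p) + 2 * \<epsilon>0 * h p)"
  define Y where "Y = l * (F1 (fst p) + F2 (snd p))"
  define S' where "S' = F1 (fst p) + F2 (snd p)"
  have eq: "\<epsilon> * h p = X - Y"
    using eps0 by (simp add: X_def Y_def l_def field_simps)
  have "0 \<le> X" using l G by (simp add: X_def)
  moreover have "Y \<le> 1 / 2 * S'"
    using l S unfolding Y_def S'_def by (intro mult_right_mono) auto
  ultimately have "S' / 2 \<le> S' + \<epsilon> * h p" using eq by linarith
  then show ?thesis by (simp add: S'_def)
qed

lemma P2D:
  assumes "P2_density f"
  shows "f \<in> borel_measurable borel" "\<And>x. 0 \<le> f x" "integrable lborel f" "(LINT x|lborel. f x) = 1"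
    "integrable lborel (\<lambda>x. (norm x)\<^sup>2 * f x)"
  using assms unfolding P2_density_def by auto

lemma meas_cont_nonneg:
  fixes F :: "real \<Rightarrow> real" and f :: "'a::euclidean_space \<Rightarrow> real"
  assumes F: "continuous_on {0..} F" and f: "f \<in> borel_measurable borel" "\<And>x. 0 \<le> f x"
  shows "(\<lambda>x. F (f x)) \<in> borel_measurable borel"
proof -
  have c: "continuous_on UNIV (\<lambda>r. F (max 0 r))"
    by (rule continuous_on_compose2[OF F]) (auto intro!: continuous_intros)
  have "(\<lambda>x. F (max 0 (f x))) \<in> borel_measurable borel"
    using measurable_compose[OF f(1) borel_measurable_continuous_onI[OF c]] by simp
  moreover have "(\<lambda>x. F (max 0 (f x))) = (\<lambda>x. F (f x))" using f(2) by (simp add: max_absorb2)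
  ultimately show ?thesis by simp
qed

lemma meas_cont_quadrant:
  fixes f g :: "'a::euclidean_space \<Rightarrow> real"
  assumes h: "continuous_on quadrant h" and f: "f \<in> borel_measurable borel" "\<And>x. 0 \<le> f x"
    and g: "g \<in> borel_measurable borel" "\<And>x. 0 \<le> g x"
  shows "(\<lambda>x. h (f x, g x)) \<in> borel_measurable borel"
proof -
  have c: "continuous_on UNIV (\<lambda>q. h (max 0 (fst q), max 0 (snd q)))"
    by (rule continuous_on_compose2[OF h]) (auto intro!: continuous_intros simp: quadrant_def)
  have "(\<lambda>x. h (max 0 (f x), max 0 (g x))) \<in> borel_measurable borel"
    by (rule borel_measurable_continuous_Pair[OF f(1) g(1), where H = "\<lambda>a b. h (max 0 a, max 0 b)"]) (use c in simp)
  moreover have "(\<lambda>x. h (max 0 (f x), max 0 (g x))) = (\<lambda>x. h (f x, g x))" using f(2) g(2) by (simp add: max_absorb2)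
  ultimately show ?thesis by simp
qed

lemma conv_lower:
  fixes K :: "'a::euclidean_space \<Rightarrow> real" and \<rho> :: "'a \<Rightarrow> real"
  assumes Kc: "continuous_on UNIV K" and Klow: "\<And>z. c * (norm z)\<^sup>2 \<le> K z"
    and Kup: "\<And>z. K z \<le> C' * (norm z)\<^sup>2" and C': "C' \<ge> 0" and Kn: "\<And>z. 0 \<le> K z"
    and P: "P2_density \<rho>"
  shows "c * ((norm x)\<^sup>2 - 2 * (x \<bullet> moment1 \<rho>) + (LINT y|lborel. (norm y)\<^sup>2 * \<rho> y)) \<le> conv K \<rho> x"
proof -
  note p = P2D[OF P]
  have Km: "K \<in> borel_measurable borel" by (rule borel_measurable_continuous_onI[OF Kc])
  have Kxm: "(\<lambda>y. K (x - y)) \<in> borel_measurable borel"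
    by (rule measurable_compose[OF _ Km]) simp
  have iv: "integrable lborel (\<lambda>y. \<rho> y *\<^sub>R y)" by (rule int_vec_moment[OF p(1,2,3,5)])
  have i_in: "integrable lborel (\<lambda>y. \<rho> y * (x \<bullet> y))"
    using integrable_inner_right[OF iv, of x] by simp
  have i_sq: "integrable lborel (\<lambda>y. c * ((norm x)\<^sup>2 * \<rho> y - 2 * (\<rho> y * (x \<bullet> y)) + (norm y)\<^sup>2 * \<rho> y))"
    using p i_in by auto
  have eqsq: "c * (norm (x - y))\<^sup>2 * \<rho> y = c * ((norm x)\<^sup>2 * \<rho> y - 2 * (\<rho> y * (x \<bullet> y)) + (norm y)\<^sup>2 * \<rho> y)" for y
  proof -
    have nd: "(norm (x - y))\<^sup>2 = (norm x)\<^sup>2 - 2 * (x \<bullet> y) + (norm y)\<^sup>2"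
      by (simp add: power2_norm_eq_inner inner_diff_left inner_diff_right inner_commute)
    show ?thesis unfolding nd by (simp add: algebra_simps)
  qed
  have iK: "integrable lborel (\<lambda>y. K (x - y) * \<rho> y)"
  proof (rule Bochner_Integration.integrable_bound[of _ "\<lambda>y. 2 * C' * ((norm x)\<^sup>2 * \<rho> y + (norm y)\<^sup>2 * \<rho> y)"])
    show "integrable lborel (\<lambda>y. 2 * C' * ((norm x)\<^sup>2 * \<rho> y + (norm y)\<^sup>2 * \<rho> y))" using p by auto
    show "(\<lambda>y. K (x - y) * \<rho> y) \<in> borel_measurable lborel" using Kxm p(1) by simp
    show "AE y in lborel. norm (K (x - y) * \<rho> y) \<le> norm (2 * C' * ((norm x)\<^sup>2 * \<rho> y + (norm y)\<^sup>2 * \<rho> y))"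
    proof (rule AE_I2)
      fix y
      have K0: "0 \<le> K (x - y)" by (rule Kn)
      have "norm (x - y) \<le> norm x + norm y" by (rule norm_triangle_ineq4)
      then have "(norm (x - y))\<^sup>2 \<le> (norm x + norm y)\<^sup>2" by (intro power_mono) auto
      also have "\<dots> \<le> 2 * ((norm x)\<^sup>2 + (norm y)\<^sup>2)"
        using sum_squares_bound[of "norm x" "norm y"] by (simp add: power2_sum)
      finally have nn: "(norm (x - y))\<^sup>2 \<le> 2 * ((norm x)\<^sup>2 + (norm y)\<^sup>2)" .
      have "K (x - y) \<le> C' * (2 * ((norm x)\<^sup>2 + (norm y)\<^sup>2))"
        using Kup[of "x - y"] mult_left_mono[OF nn C'] by linarith
      then have le: "K (x - y) * \<rho> y \<le> C' * (2 * ((norm x)\<^sup>2 + (norm y)\<^sup>2)) * \<rho> y"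
        using p(2)[of y] by (intro mult_right_mono) auto
      have eq: "C' * (2 * ((norm x)\<^sup>2 + (norm y)\<^sup>2)) * \<rho> y = 2 * C' * ((norm x)\<^sup>2 * \<rho> y + (norm y)\<^sup>2 * \<rho> y)"
        by (simp add: algebra_simps)
      have n1: "0 \<le> K (x - y) * \<rho> y" using K0 p(2)[of y] by simp
      have n2: "0 \<le> 2 * C' * ((norm x)\<^sup>2 * \<rho> y + (norm y)\<^sup>2 * \<rho> y)" using C' p(2)[of y] by simp
      show "norm (K (x - y) * \<rho> y) \<le> norm (2 * C' * ((norm x)\<^sup>2 * \<rho> y + (norm y)\<^sup>2 * \<rho> y))"
        unfolding real_norm_def abs_of_nonneg[OF n1] abs_of_nonneg[OF n2] using le[unfolded eq] .
    qed
  qed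
  have "(LINT y|lborel. c * ((norm x)\<^sup>2 * \<rho> y - 2 * (\<rho> y * (x \<bullet> y)) + (norm y)\<^sup>2 * \<rho> y)) \<le> (LINT y|lborel. K (x - y) * \<rho> y)"
  proof (rule integral_mono[OF i_sq iK])
    fix y
    have "c * (norm (x - y))\<^sup>2 * \<rho> y \<le> K (x - y) * \<rho> y"
      using Klow[of "x - y"] p(2)[of y] by (intro mult_right_mono) auto
    then show "c * ((norm x)\<^sup>2 * \<rho> y - 2 * (\<rho> y * (x \<bullet> y)) + (norm y)\<^sup>2 * \<rho> y) \<le> K (x - y) * \<rho> y"
      using eqsq[of y] by simp
  qed
  moreover have "(LINT y|lborel. c * ((norm x)\<^sup>2 * \<rho> y - 2 * (\<rho> y * (x \<bullet> y)) + (norm y)\<^sup>2 * \<rho> y)) =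
      c * ((norm x)\<^sup>2 - 2 * (x \<bullet> moment1 \<rho>) + (LINT y|lborel. (norm y)\<^sup>2 * \<rho> y))"
  proof -
    have "(LINT y|lborel. \<rho> y * (x \<bullet> y)) = x \<bullet> moment1 \<rho>"
      using integral_inner_right[of x lborel "\<lambda>y. \<rho> y *\<^sub>R y"] iv by (simp add: moment1_def)
    then show ?thesis using p i_in by simp
  qed
  ultimately show ?thesis unfolding conv_def by linarith
qed

lemma energy_est:
  fixes K :: "'a::euclidean_space \<Rightarrow> real" and \<rho>1 \<rho>2 :: "'a \<Rightarrow> real"
  assumes Kc: "continuous_on UNIV K" and Klow: "\<And>z. c * (norm z)\<^sup>2 \<le> K z"
    and Kup: "\<And>z. K z \<le> C' * (norm z)\<^sup>2" and C': "C' \<ge> 0" and Kn: "\<And>z. 0 \<le> K z"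
    and F1c: "continuous_on {0..} F1" and F1n: "\<And>r. 0 \<le> r \<Longrightarrow> 0 \<le> F1 r"
    and F2c: "continuous_on {0..} F2" and F2n: "\<And>r. 0 \<le> r \<Longrightarrow> 0 \<le> F2 r"
    and hc: "continuous_on quadrant h"
    and W: "\<And>p. p \<in> quadrant \<Longrightarrow> (F1 (fst p) + F2 (snd p)) / 2 \<le> F1 (fst p) + F2 (snd p) + \<epsilon> * h p"
    and P1: "P2_density \<rho>1" and P2: "P2_density \<rho>2"
    and E: "\<bar>energy \<epsilon> F1 F2 h K \<rho>1 \<rho>2\<bar> \<le> ereal C"
  shows "integrable lborel (\<lambda>x. F1 (\<rho>1 x))" "integrable lborel (\<lambda>x. F2 (\<rho>2 x))"
    "(LINT x|lborel. F1 (\<rho>1 x)) + (LINT x|lborel. F2 (\<rho>2 x)) + 2 * c * ((LINT x|lborel. (norm x)\<^sup>2 * \<rho>1 x)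
       + (LINT x|lborel. (norm x)\<^sup>2 * \<rho>2 x) - 2 * (moment1 \<rho>1 \<bullet> moment1 \<rho>2)) \<le> 2 * C"
proof -
  note p1 = P2D[OF P1] and p2 = P2D[OF P2]
  define e where "e x = F1 (\<rho>1 x) + F2 (\<rho>2 x) + \<epsilon> * h (\<rho>1 x, \<rho>2 x) + \<rho>1 x * conv K \<rho>2 x" for x
  have ie: "integrable lborel e" and Ce: "(LINT x|lborel. e x) \<le> C"
  proof -
    have "integrable lborel e"
    proof (rule ccontr)
      assume "\<not> integrable lborel e"
      then have "energy \<epsilon> F1 F2 h K \<rho>1 \<rho>2 = \<infinity>" unfolding energy_def Let_def e_def[abs_def] by simp
      then show False using E by simp
    qed
    moreover from this have "energy \<epsilon> F1 F2 h K \<rho>1 \<rho>2 = ereal (LINT x|lborel. e x)"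
      unfolding energy_def Let_def e_def[abs_def] by simp
    ultimately show "integrable lborel e" "(LINT x|lborel. e x) \<le> C" using E
      by auto
  qed
  define Wf where "Wf x = F1 (\<rho>1 x) + F2 (\<rho>2 x) + \<epsilon> * h (\<rho>1 x, \<rho>2 x)" for x
  define S where "S x = F1 (\<rho>1 x) + F2 (\<rho>2 x)" for x
  define cr where "cr x = \<rho>1 x * conv K \<rho>2 x" for x
  have mF1: "(\<lambda>x. F1 (\<rho>1 x)) \<in> borel_measurable borel" by (rule meas_cont_nonneg[OF F1c p1(1,2)])
  have mF2: "(\<lambda>x. F2 (\<rho>2 x)) \<in> borel_measurable borel" by (rule meas_cont_nonneg[OF F2c p2(1,2)])
  have mh: "(\<lambda>x. h (\<rho>1 x, \<rho>2 x)) \<in> borel_measurable borel" by (rule meas_cont_quadrant[OF hc p1(1,2) p2(1,2)])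
  have mW: "Wf \<in> borel_measurable lborel" unfolding Wf_def using mF1 mF2 mh by simp
  have mS: "S \<in> borel_measurable lborel" unfolding S_def using mF1 mF2 by simp
  have WS: "S x / 2 \<le> Wf x" for x
    using W[of "(\<rho>1 x, \<rho>2 x)"] p1(2) p2(2) by (simp add: quadrant_def S_def Wf_def)
  have S0: "0 \<le> S x" for x using F1n[OF p1(2)] F2n[OF p2(2)] by (simp add: S_def)
  have ecr: "e x = Wf x + cr x" for x by (simp add: e_def Wf_def cr_def)
  have mcr: "cr \<in> borel_measurable lborel"
  proof -
    have "cr = (\<lambda>x. e x - Wf x)" using ecr by (auto simp: fun_eq_iff)
    then show ?thesis using borel_measurable_integrable[OF ie] mW by simp
  qed
  have cr0: "0 \<le> cr x" for x
  proof -
    have "0 \<le> conv K \<rho>2 x" unfolding conv_def by (rule integral_nonneg_AE) (use Kn p2(2) in simp)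
    then show ?thesis using p1(2)[of x] by (simp add: cr_def)
  qed
  have icr: "integrable lborel cr"
  proof (rule Bochner_Integration.integrable_bound[OF ie mcr])
    show "AE x in lborel. norm (cr x) \<le> norm (e x)"
    proof (rule AE_I2)
      fix x
      have a: "0 \<le> cr x" "S x / 2 \<le> Wf x" "0 \<le> S x" "e x = Wf x + cr x" using cr0 WS S0 ecr by auto
      then have "norm (cr x) = cr x" "norm (e x) = e x" by auto
      then show "norm (cr x) \<le> norm (e x)" using a by linarith
    qed
  qed
  have iW: "integrable lborel Wf"
  proof -
    have "Wf = (\<lambda>x. e x - cr x)" using ecr by (auto simp: fun_eq_iff)
    then show ?thesis using ie icr by simp
  qed
  have iS: "integrable lborel S"
  proof (rule Bochner_Integration.integrable_bound[of _ "\<lambda>x. 2 * Wf x"])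
    show "integrable lborel (\<lambda>x. 2 * Wf x)" using iW by simp
    show "S \<in> borel_measurable lborel" by (rule mS)
    show "AE x in lborel. norm (S x) \<le> norm (2 * Wf x)"
    proof (rule AE_I2)
      fix x
      have a: "S x / 2 \<le> Wf x" "0 \<le> S x" using WS S0 by auto
      then have "norm (S x) = S x" "norm (2 * Wf x) = 2 * Wf x" by auto
      then show "norm (S x) \<le> norm (2 * Wf x)" using a by linarith
    qed
  qed
  have iF1: "integrable lborel (\<lambda>x. F1 (\<rho>1 x))"
  proof (rule Bochner_Integration.integrable_bound[OF iS])
    show "(\<lambda>x. F1 (\<rho>1 x)) \<in> borel_measurable lborel" using mF1 by simp
    show "AE x in lborel. norm (F1 (\<rho>1 x)) \<le> norm (S x)"
      using F1n[OF p1(2)] F2n[OF p2(2)] by (intro AE_I2) (simp add: S_def)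
  qed
  have iF2: "integrable lborel (\<lambda>x. F2 (\<rho>2 x))"
  proof (rule Bochner_Integration.integrable_bound[OF iS])
    show "(\<lambda>x. F2 (\<rho>2 x)) \<in> borel_measurable lborel" using mF2 by simp
    show "AE x in lborel. norm (F2 (\<rho>2 x)) \<le> norm (S x)"
      using F1n[OF p1(2)] F2n[OF p2(2)] by (intro AE_I2) (simp add: S_def)
  qed
  show "integrable lborel (\<lambda>x. F1 (\<rho>1 x))" "integrable lborel (\<lambda>x. F2 (\<rho>2 x))" by (fact iF1, fact iF2)
  define m2 where "m2 = moment1 \<rho>2"
  define M22 where "M22 = (LINT y|lborel. (norm y)\<^sup>2 * \<rho>2 y)"
  define q where "q x = c * ((norm x)\<^sup>2 * \<rho>1 x - 2 * (\<rho>1 x * (x \<bullet> m2)) + M22 * \<rho>1 x)" for x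
  have qcr: "q x \<le> cr x" for x
  proof -
    have "c * ((norm x)\<^sup>2 - 2 * (x \<bullet> m2) + M22) \<le> conv K \<rho>2 x"
      unfolding m2_def M22_def by (rule conv_lower[OF Kc Klow Kup C' Kn P2])
    then have "\<rho>1 x * (c * ((norm x)\<^sup>2 - 2 * (x \<bullet> m2) + M22)) \<le> \<rho>1 x * conv K \<rho>2 x"
      using p1(2)[of x] by (rule mult_left_mono)
    then show ?thesis by (simp add: q_def cr_def algebra_simps)
  qed
  have iv1: "integrable lborel (\<lambda>x. \<rho>1 x *\<^sub>R x)" by (rule int_vec_moment[OF p1(1,2,3,5)])
  have iin: "integrable lborel (\<lambda>x. \<rho>1 x * (x \<bullet> m2))"
    using integrable_inner_left[OF iv1, of m2] by simp
  have iq: "integrable lborel q" unfolding q_def using p1 iin by auto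
  have intq: "(LINT x|lborel. q x) = c * ((LINT x|lborel. (norm x)\<^sup>2 * \<rho>1 x) - 2 * (moment1 \<rho>1 \<bullet> m2) + M22)"
  proof -
    have "(LINT x|lborel. \<rho>1 x * (x \<bullet> m2)) = moment1 \<rho>1 \<bullet> m2"
      using integral_inner_left[of m2 lborel "\<lambda>x. \<rho>1 x *\<^sub>R x"] iv1 by (simp add: moment1_def)
    then show ?thesis unfolding q_def using p1 iin by simp
  qed
  have "(LINT x|lborel. e x) = (LINT x|lborel. Wf x) + (LINT x|lborel. cr x)"
    unfolding ecr using iW icr by simp
  moreover have "(LINT x|lborel. S x) / 2 \<le> (LINT x|lborel. Wf x)"
  proof -
    have "(LINT x|lborel. S x / 2) \<le> (LINT x|lborel. Wf x)" using iS iW WS by (intro integral_mono) auto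
    then show ?thesis by simp
  qed
  moreover have "(LINT x|lborel. q x) \<le> (LINT x|lborel. cr x)" using iq icr qcr by (intro integral_mono) auto
  moreover have "(LINT x|lborel. S x) = (LINT x|lborel. F1 (\<rho>1 x)) + (LINT x|lborel. F2 (\<rho>2 x))"
    unfolding S_def using iF1 iF2 by simp
  ultimately show "(LINT x|lborel. F1 (\<rho>1 x)) + (LINT x|lborel. F2 (\<rho>2 x)) + 2 * c * ((LINT x|lborel. (norm x)\<^sup>2 * \<rho>1 x)
       + (LINT x|lborel. (norm x)\<^sup>2 * \<rho>2 x) - 2 * (moment1 \<rho>1 \<bullet> moment1 \<rho>2)) \<le> 2 * C"
    using Ce intq unfolding M22_def m2_def by (simp add: algebra_simps)
qed

lemma alg_bound:
  fixes m1 m2 :: "'a::real_inner"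
  assumes E: "A1 + A2 + 2 * c * (M1 + M2 - 2 * (m1 \<bullet> m2)) \<le> 2 * C"
    and pos: "0 \<le> A1" "0 \<le> A2" "0 \<le> M1" "0 \<le> M2" "c > 0" and D: "norm (m1 + m2) \<le> D"
  shows "A1 + A2 \<le> 2 * C + c * D\<^sup>2" "M1 + M2 \<le> (2 * C + c * D\<^sup>2) / (2 * c)"
proof -
  define d where "d = m1 + m2"
  have "m1 \<bullet> m2 = m1 \<bullet> d - m1 \<bullet> m1" by (simp add: d_def inner_add_right)
  moreover have "m1 \<bullet> d \<le> norm m1 * norm d" by (rule norm_cauchy_schwarz)
  moreover have "m1 \<bullet> m1 = (norm m1)\<^sup>2" by (simp add: power2_norm_eq_inner)
  moreover have "0 \<le> 2 * (norm m1 - norm d / 2)\<^sup>2" by simp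
  moreover have "2 * (norm m1 - norm d / 2)\<^sup>2 = 2 * (norm m1)\<^sup>2 - 2 * (norm m1 * norm d) + (norm d)\<^sup>2 / 2"
    by (simp add: power2_diff power_divide algebra_simps)
  moreover have "(norm d)\<^sup>2 \<le> D\<^sup>2" using D by (intro power_mono) (auto simp: d_def)
  ultimately have key: "- D\<^sup>2 / 2 \<le> - 2 * (m1 \<bullet> m2)" by linarith
  then have "2 * c * (- D\<^sup>2 / 2) \<le> 2 * c * (- 2 * (m1 \<bullet> m2))" using pos(5) by (intro mult_left_mono) auto
  then have key2: "- c * D\<^sup>2 \<le> - 4 * c * (m1 \<bullet> m2)" by simp
  have Eexp: "A1 + A2 + 2 * c * M1 + 2 * c * M2 - 4 * c * (m1 \<bullet> m2) \<le> 2 * C"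
    using E by (simp add: algebra_simps)
  have "0 \<le> 2 * c * M1" "0 \<le> 2 * c * M2" using pos by auto
  then show "A1 + A2 \<le> 2 * C + c * D\<^sup>2" using Eexp key2 by linarith
  have "2 * c * (M1 + M2) = 2 * c * M1 + 2 * c * M2" by (simp add: algebra_simps)
  then have "2 * c * (M1 + M2) \<le> 2 * C + c * D\<^sup>2" using Eexp key2 pos(1,2) by linarith
  then show "M1 + M2 \<le> (2 * C + c * D\<^sup>2) / (2 * c)" using pos(5) by (simp add: field_simps)
qed

lemma sq_bound:
  fixes \<rho> :: "'a::euclidean_space \<Rightarrow> real"
  assumes P: "P2_density \<rho>" and ab: "\<forall>r\<ge>0. r\<^sup>2 \<le> a * r + b * F r" and b: "0 \<le> b"
    and iF: "integrable lborel (\<lambda>x. F (\<rho> x))" and Fb: "(LINT x|lborel. F (\<rho> x)) \<le> B"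
  shows "integrable lborel (\<lambda>x. (\<rho> x)\<^sup>2)" "(LINT x|lborel. (\<rho> x)\<^sup>2) \<le> \<bar>a\<bar> + b * B"
proof -
  note p = P2D[OF P]
  have i2: "integrable lborel (\<lambda>x. \<bar>a\<bar> * \<rho> x + b * F (\<rho> x))" using p iF by auto
  have pt: "(\<rho> x)\<^sup>2 \<le> \<bar>a\<bar> * \<rho> x + b * F (\<rho> x)" for x
  proof -
    have "a * \<rho> x \<le> \<bar>a\<bar> * \<rho> x" using p(2)[of x] by (intro mult_right_mono) auto
    then show ?thesis using ab p(2)[of x] by force
  qed
  show i1: "integrable lborel (\<lambda>x. (\<rho> x)\<^sup>2)"
  proof (rule Bochner_Integration.integrable_bound[OF i2])
    show "(\<lambda>x. (\<rho> x)\<^sup>2) \<in> borel_measurable lborel" using p(1) by simp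
    show "AE x in lborel. norm ((\<rho> x)\<^sup>2) \<le> norm (\<bar>a\<bar> * \<rho> x + b * F (\<rho> x))"
    proof (rule AE_I2)
      fix x
      have "0 \<le> (\<rho> x)\<^sup>2" by simp
      then show "norm ((\<rho> x)\<^sup>2) \<le> norm (\<bar>a\<bar> * \<rho> x + b * F (\<rho> x))" using pt[of x] by simp
    qed
  qed
  have "(LINT x|lborel. (\<rho> x)\<^sup>2) \<le> (LINT x|lborel. \<bar>a\<bar> * \<rho> x + b * F (\<rho> x))"
    using i1 i2 pt by (intro integral_mono) auto
  also have "\<dots> = \<bar>a\<bar> + b * (LINT x|lborel. F (\<rho> x))" using p iF by simp
  also have "\<dots> \<le> \<bar>a\<bar> + b * B" using b Fb by (simp add: mult_left_mono)
  finally show "(LINT x|lborel. (\<rho> x)\<^sup>2) \<le> \<bar>a\<bar> + b * B" .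
qed

lemma dseq_from:
  assumes "\<And>n. P2_density (\<rho> n)" "\<And>n. integrable lborel (\<lambda>x. (\<rho> n x)\<^sup>2)"
    "\<And>n. (LINT x|lborel. (\<rho> n x)\<^sup>2) \<le> Q" "\<And>n. (LINT x|lborel. (norm x)\<^sup>2 * \<rho> n x) \<le> M"
  shows "dseq \<rho> Q M"
  using assms by unfold_locales (auto dest: P2D)

lemma pair_compact:
  fixes \<rho>1 \<rho>2 :: "nat \<Rightarrow> 'a::euclidean_space \<Rightarrow> real"
  assumes d1: "dseq \<rho>1 Q M" and d2: "dseq \<rho>2 Q M"
    and mom: "(\<lambda>n. moment1 (\<rho>1 n) + moment1 (\<rho>2 n)) \<longlonglongrightarrow> 0"
  shows "\<exists>s \<sigma>1 \<sigma>2. strict_mono s \<and> X0 \<sigma>1 \<sigma>2 \<and> weak_L1_conv (\<rho>1 \<circ> s) \<sigma>1 \<and> weak_L1_conv (\<rho>2 \<circ> s) \<sigma>2"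
proof -
  obtain s1 \<sigma>1 where s1: "strict_mono s1" "\<sigma>1 \<in> borel_measurable borel" "\<forall>x. 0 \<le> \<sigma>1 x" "integrable lborel \<sigma>1"
     "(LINT x|lborel. \<sigma>1 x) = 1" "integrable lborel (\<lambda>x. (norm x)\<^sup>2 * \<sigma>1 x)"
     "\<forall>g. g \<in> borel_measurable lborel \<and> bounded (range g) \<longrightarrow>
        (\<lambda>n. LINT x|lborel. \<rho>1 (s1 n) x * g x) \<longlonglongrightarrow> (LINT x|lborel. \<sigma>1 x * g x)"
     "(\<lambda>n. LINT x|lborel. \<rho>1 (s1 n) x *\<^sub>R x) \<longlonglongrightarrow> (LINT x|lborel. \<sigma>1 x *\<^sub>R x)"
    using dseq.compact[OF d1] by blast
  have d2': "dseq (\<rho>2 \<circ> s1) Q M" by (rule dseq.subseq[OF d2])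
  obtain s2 \<sigma>2 where s2: "strict_mono s2" "\<sigma>2 \<in> borel_measurable borel" "\<forall>x. 0 \<le> \<sigma>2 x" "integrable lborel \<sigma>2"
     "(LINT x|lborel. \<sigma>2 x) = 1" "integrable lborel (\<lambda>x. (norm x)\<^sup>2 * \<sigma>2 x)"
     "\<forall>g. g \<in> borel_measurable lborel \<and> bounded (range g) \<longrightarrow>
        (\<lambda>n. LINT x|lborel. (\<rho>2 \<circ> s1) (s2 n) x * g x) \<longlonglongrightarrow> (LINT x|lborel. \<sigma>2 x * g x)"
     "(\<lambda>n. LINT x|lborel. (\<rho>2 \<circ> s1) (s2 n) x *\<^sub>R x) \<longlonglongrightarrow> (LINT x|lborel. \<sigma>2 x *\<^sub>R x)"
    using dseq.compact[OF d2'] by blast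
  define s where "s = s1 \<circ> s2"
  have s: "strict_mono s" unfolding s_def using s1(1) s2(1) by (rule strict_mono_o)
  have P1: "P2_density \<sigma>1" "P2_density \<sigma>2" unfolding P2_density_def using s1 s2 by auto
  have w1: "weak_L1_conv (\<rho>1 \<circ> s) \<sigma>1"
    unfolding weak_L1_conv_def
  proof (intro conjI allI impI)
    show "integrable lborel \<sigma>1" by (rule s1(4))
    show "integrable lborel ((\<rho>1 \<circ> s) n)" for n using dseq.int[OF d1] by simp
    fix g :: "'a \<Rightarrow> real" assume g: "g \<in> borel_measurable lborel \<and> bounded (range g)"
    from LIMSEQ_subseq_LIMSEQ[OF s1(7)[rule_format, OF g] s2(1)]
    show "(\<lambda>n. LINT x|lborel. (\<rho>1 \<circ> s) n x * g x) \<longlonglongrightarrow> (LINT x|lborel. \<sigma>1 x * g x)"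
      by (simp add: s_def o_def)
  qed
  have w2: "weak_L1_conv (\<rho>2 \<circ> s) \<sigma>2"
    unfolding weak_L1_conv_def
  proof (intro conjI allI impI)
    show "integrable lborel \<sigma>2" by (rule s2(4))
    show "integrable lborel ((\<rho>2 \<circ> s) n)" for n using dseq.int[OF d2] by simp
    fix g :: "'a \<Rightarrow> real" assume g: "g \<in> borel_measurable lborel \<and> bounded (range g)"
    from s2(7)[rule_format, OF g]
    show "(\<lambda>n. LINT x|lborel. (\<rho>2 \<circ> s) n x * g x) \<longlonglongrightarrow> (LINT x|lborel. \<sigma>2 x * g x)"
      by (simp add: s_def o_def)
  qed
  have m1: "(\<lambda>n. moment1 (\<rho>1 (s n))) \<longlonglongrightarrow> moment1 \<sigma>1"
    using LIMSEQ_subseq_LIMSEQ[OF s1(8) s2(1)] by (simp add: s_def o_def moment1_def)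
  have m2: "(\<lambda>n. moment1 (\<rho>2 (s n))) \<longlonglongrightarrow> moment1 \<sigma>2"
    using s2(8) by (simp add: s_def o_def moment1_def)
  have "(\<lambda>n. moment1 (\<rho>1 (s n)) + moment1 (\<rho>2 (s n))) \<longlonglongrightarrow> moment1 \<sigma>1 + moment1 \<sigma>2"
    by (rule tendsto_add[OF m1 m2])
  moreover have "(\<lambda>n. moment1 (\<rho>1 (s n)) + moment1 (\<rho>2 (s n))) \<longlonglongrightarrow> 0"
    using LIMSEQ_subseq_LIMSEQ[OF mom s] by (simp add: o_def)
  ultimately have "moment1 \<sigma>1 + moment1 \<sigma>2 = 0" by (rule LIMSEQ_unique)
  then have "X0 \<sigma>1 \<sigma>2" using P1 by (simp add: X0_def)
  then show ?thesis using s w1 w2 by blast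
qed

theorem lemma3p1:
  fixes K :: "'a::euclidean_space \<Rightarrow> real" and gK :: "'a \<Rightarrow> 'a"
    and HK :: "'a \<Rightarrow> 'a \<Rightarrow>\<^sub>L 'a"
    and lam CK :: real
    and F1 F1' F1'' F2 F2' F2'' :: "real \<Rightarrow> real"
    and h h1 h2 h11 h12 h21 h22 :: "real \<times> real \<Rightarrow> real"
    and \<kappa>11 \<kappa>12 \<kappa>21 \<kappa>22 :: real
    and \<epsilon>0 \<epsilon> :: real
  assumes K_nonneg: "\<forall>x. 0 \<le> K x"
    and K_radial: "\<forall>x y. norm x = norm y \<longrightarrow> K x = K y"
    and K_zero: "K 0 = 0"
    and K_grad: "\<forall>x. (K has_derivative (\<lambda>v. gK x \<bullet> v)) (at x)"
    and K_hess: "\<forall>x. (gK has_derivative blinfun_apply (HK x)) (at x)"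
    and K_C2: "continuous_on UNIV HK"
    and lambda_pos: "lam > 0"
    and K_convex: "\<forall>x v. v \<bullet> blinfun_apply (HK x) v \<ge> lam * (norm v)\<^sup>2"
    and K_bound: "\<forall>x. norm (HK x) \<le> CK"
    and F1: "hypF F1 F1' F1''"
    and F2: "hypF F2 F2' F2''"
    and h_d1: "\<forall>p\<in>quadrant. (h has_derivative (\<lambda>v. h1 p * fst v + h2 p * snd v)) (at p within quadrant)"
    and h_d2a: "\<forall>p\<in>quadrant. (h1 has_derivative (\<lambda>v. h11 p * fst v + h12 p * snd v)) (at p within quadrant)"
    and h_d2b: "\<forall>p\<in>quadrant. (h2 has_derivative (\<lambda>v. h21 p * fst v + h22 p * snd v)) (at p within quadrant)"
    and h_C2: "continuous_on quadrant h11 \<and> continuous_on quadrant h12 \<and>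
               continuous_on quadrant h21 \<and> continuous_on quadrant h22"
    and h_axes: "\<forall>p\<in>quadrant. fst p = 0 \<or> snd p = 0 \<longrightarrow> h p = 0 \<and> h1 p = 0 \<and> h2 p = 0"
    and theta11: "\<kappa>11 > 0 \<and> hyp_theta h11 F1' F2' F1'' fst fst \<kappa>11"
    and theta12: "\<kappa>12 > 0 \<and> hyp_theta h12 F1' F2' F2'' snd fst \<kappa>12"
    and theta21: "\<kappa>21 > 0 \<and> hyp_theta h21 F1' F2' F1'' fst snd \<kappa>21"
    and theta22: "\<kappa>22 > 0 \<and> hyp_theta h22 F1' F2' F2'' snd snd \<kappa>22"
    and eps0: "\<epsilon>0 > 0"
    and eps0_convex: "convex_on quadrant (\<lambda>r. F1 (fst r) + F2 (snd r) + 2 * \<epsilon>0 * h r)"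
    and eps: "0 < \<epsilon>" "\<epsilon> \<le> \<epsilon>0"
  shows
    "(\<forall>(\<rho>1 :: nat \<Rightarrow> 'a \<Rightarrow> real) \<rho>2 C.
        (\<forall>n. X0 (\<rho>1 n) (\<rho>2 n)) \<and> (\<forall>n. \<bar>energy \<epsilon> F1 F2 h K (\<rho>1 n) (\<rho>2 n)\<bar> \<le> ereal C)
        \<longrightarrow> (\<exists>s \<sigma>1 \<sigma>2. strict_mono s \<and> X0 \<sigma>1 \<sigma>2 \<and>
               weak_L1_conv (\<rho>1 \<circ> s) \<sigma>1 \<and> weak_L1_conv (\<rho>2 \<circ> s) \<sigma>2)) \<and>
     (\<forall>(\<rho>1 :: nat \<Rightarrow> 'a \<Rightarrow> real) \<rho>2 C.
        (\<forall>n. P2_density (\<rho>1 n) \<and> P2_density (\<rho>2 n)) \<and>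
        (\<forall>n. \<bar>energy \<epsilon> F1 F2 h K (\<rho>1 n) (\<rho>2 n)\<bar> \<le> ereal C) \<and>
        (\<lambda>n. moment1 (\<rho>1 n) + moment1 (\<rho>2 n)) \<longlonglongrightarrow> 0
        \<longrightarrow> (\<exists>s \<sigma>1 \<sigma>2. strict_mono s \<and> X0 \<sigma>1 \<sigma>2 \<and>
               weak_L1_conv (\<rho>1 \<circ> s) \<sigma>1 \<and> weak_L1_conv (\<rho>2 \<circ> s) \<sigma>2))"
proof -
  have Kc: "continuous_on UNIV K"
    by (rule has_derivative_continuous_on) (use K_grad in auto)
  have CK0: "0 \<le> CK" using K_bound norm_ge_zero[of "HK 0"] by (meson order_trans)
  have Klow: "\<And>z. lam / 2 * (norm z)\<^sup>2 \<le> K z" and Kup: "\<And>z. K z \<le> CK / 2 * (norm z)\<^sup>2"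
    using K_quad[OF K_nonneg K_zero K_grad K_hess K_convex K_bound] by auto
  have Kn: "\<And>z. 0 \<le> K z" using K_nonneg by auto
  have F1n: "\<And>r. 0 \<le> r \<Longrightarrow> 0 \<le> F1 r" and F1c: "continuous_on {0..} F1" using F_props[OF F1] by auto
  have F2n: "\<And>r. 0 \<le> r \<Longrightarrow> 0 \<le> F2 r" and F2c: "continuous_on {0..} F2" using F_props[OF F2] by auto
  obtain a1 b1 where ab1: "0 \<le> b1" "\<forall>r\<ge>0. r\<^sup>2 \<le> a1 * r + b1 * F1 r" using F_props(3)[OF F1] by blast
  obtain a2 b2 where ab2: "0 \<le> b2" "\<forall>r\<ge>0. r\<^sup>2 \<le> a2 * r + b2 * F2 r" using F_props(3)[OF F2] by blast
  have hc: "continuous_on quadrant h"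
    by (rule has_derivative_continuous_on) (use h_d1 in auto)
  have Wh: "\<And>p. p \<in> quadrant \<Longrightarrow> (F1 (fst p) + F2 (snd p)) / 2 \<le> F1 (fst p) + F2 (snd p) + \<epsilon> * h p"
    by (rule W_half[OF F1 F2 h_d1 h_axes eps0 eps0_convex eps])
  have lam2: "lam / 2 > 0" using lambda_pos by simp
  have key: "\<exists>Q M. dseq \<rho>1 Q M \<and> dseq \<rho>2 Q M"
    if P: "\<And>n. P2_density (\<rho>1 n)" "\<And>n. P2_density (\<rho>2 n)"
      and E: "\<And>n. \<bar>energy \<epsilon> F1 F2 h K (\<rho>1 n) (\<rho>2 n)\<bar> \<le> ereal C"
      and D: "\<And>n. norm (moment1 (\<rho>1 n) + moment1 (\<rho>2 n)) \<le> D"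
    for \<rho>1 \<rho>2 :: "nat \<Rightarrow> 'a \<Rightarrow> real" and C D
  proof -
    define B where "B = 2 * C + lam / 2 * D\<^sup>2"
    define MB where "MB = B / (2 * (lam / 2))"
    define Q where "Q = max (\<bar>a1\<bar> + b1 * B) (\<bar>a2\<bar> + b2 * B)"
    have bnd: "integrable lborel (\<lambda>x. (\<rho>1 n x)\<^sup>2) \<and> (LINT x|lborel. (\<rho>1 n x)\<^sup>2) \<le> Q \<and>
        integrable lborel (\<lambda>x. (\<rho>2 n x)\<^sup>2) \<and> (LINT x|lborel. (\<rho>2 n x)\<^sup>2) \<le> Q \<and>
        (LINT x|lborel. (norm x)\<^sup>2 * \<rho>1 n x) \<le> MB \<and> (LINT x|lborel. (norm x)\<^sup>2 * \<rho>2 n x) \<le> MB" for n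
    proof -
      note est = energy_est[OF Kc Klow Kup _ Kn F1c F1n F2c F2n hc Wh P(1)[of n] P(2)[of n] E[of n]]
      have C'0: "0 \<le> CK / 2" using CK0 by simp
      note est = est[OF C'0]
      have A1: "0 \<le> (LINT x|lborel. F1 (\<rho>1 n x))" by (rule integral_nonneg_AE) (use F1n P2D(2)[OF P(1)[of n]] in auto)
      have A2: "0 \<le> (LINT x|lborel. F2 (\<rho>2 n x))" by (rule integral_nonneg_AE) (use F2n P2D(2)[OF P(2)[of n]] in auto)
      have M1: "0 \<le> (LINT x|lborel. (norm x)\<^sup>2 * \<rho>1 n x)" by (rule integral_nonneg_AE) (use P2D(2)[OF P(1)[of n]] in auto)
      have M2: "0 \<le> (LINT x|lborel. (norm x)\<^sup>2 * \<rho>2 n x)" by (rule integral_nonneg_AE) (use P2D(2)[OF P(2)[of n]] in auto)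
      note ab = alg_bound[OF est(3) A1 A2 M1 M2 lam2 D[of n]]
      have F1b: "(LINT x|lborel. F1 (\<rho>1 n x)) \<le> B" using ab(1) A2 by (simp add: B_def)
      have F2b: "(LINT x|lborel. F2 (\<rho>2 n x)) \<le> B" using ab(1) A1 by (simp add: B_def)
      note s1 = sq_bound[OF P(1)[of n] ab1(2) ab1(1) est(1) F1b]
      note s2 = sq_bound[OF P(2)[of n] ab2(2) ab2(1) est(2) F2b]
      have "(LINT x|lborel. (norm x)\<^sup>2 * \<rho>1 n x) \<le> MB" "(LINT x|lborel. (norm x)\<^sup>2 * \<rho>2 n x) \<le> MB"
        using ab(2) M1 M2 by (simp_all add: MB_def B_def)
      then show ?thesis using s1 s2 by (auto simp: Q_def)
    qed
    have "dseq \<rho>1 Q MB" by (rule dseq_from) (use P bnd in auto)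
    moreover have "dseq \<rho>2 Q MB" by (rule dseq_from) (use P bnd in auto)
    ultimately show ?thesis by blast
  qed
  show ?thesis
  proof (intro conjI allI impI)
    fix \<rho>1 \<rho>2 :: "nat \<Rightarrow> 'a \<Rightarrow> real" and C
    assume a: "(\<forall>n. X0 (\<rho>1 n) (\<rho>2 n)) \<and> (\<forall>n. \<bar>energy \<epsilon> F1 F2 h K (\<rho>1 n) (\<rho>2 n)\<bar> \<le> ereal C)"
    have P: "\<And>n. P2_density (\<rho>1 n)" "\<And>n. P2_density (\<rho>2 n)" and m0: "\<And>n. moment1 (\<rho>1 n) + moment1 (\<rho>2 n) = 0"
      using a by (auto simp: X0_def)
    have "\<exists>Q M. dseq \<rho>1 Q M \<and> dseq \<rho>2 Q M"
      by (rule key[of \<rho>1 \<rho>2 C 0]) (use P a m0 in auto)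
    then obtain Q M where d: "dseq \<rho>1 Q M" "dseq \<rho>2 Q M" by blast
    have "(\<lambda>n. moment1 (\<rho>1 n) + moment1 (\<rho>2 n)) \<longlonglongrightarrow> 0" using m0 by simp
    then show "\<exists>s \<sigma>1 \<sigma>2. strict_mono s \<and> X0 \<sigma>1 \<sigma>2 \<and> weak_L1_conv (\<rho>1 \<circ> s) \<sigma>1 \<and> weak_L1_conv (\<rho>2 \<circ> s) \<sigma>2"
      by (rule pair_compact[OF d])
  next
    fix \<rho>1 \<rho>2 :: "nat \<Rightarrow> 'a \<Rightarrow> real" and C
    assume a: "(\<forall>n. P2_density (\<rho>1 n) \<and> P2_density (\<rho>2 n)) \<and>
        (\<forall>n. \<bar>energy \<epsilon> F1 F2 h K (\<rho>1 n) (\<rho>2 n)\<bar> \<le> ereal C) \<and>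
        (\<lambda>n. moment1 (\<rho>1 n) + moment1 (\<rho>2 n)) \<longlonglongrightarrow> 0"
    have P: "\<And>n. P2_density (\<rho>1 n)" "\<And>n. P2_density (\<rho>2 n)" using a by auto
    have mom: "(\<lambda>n. moment1 (\<rho>1 n) + moment1 (\<rho>2 n)) \<longlonglongrightarrow> 0" using a by blast
    have "Bseq (\<lambda>n. moment1 (\<rho>1 n) + moment1 (\<rho>2 n))"
      using mom by (intro convergent_imp_Bseq) (auto simp: convergent_def)
    then obtain D where D: "\<And>n. norm (moment1 (\<rho>1 n) + moment1 (\<rho>2 n)) \<le> D"
      by (rule BseqE) blast
    have "\<exists>Q M. dseq \<rho>1 Q M \<and> dseq \<rho>2 Q M"
      by (rule key[of \<rho>1 \<rho>2 C D]) (use P a D in auto)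
    then obtain Q M where d: "dseq \<rho>1 Q M" "dseq \<rho>2 Q M" by blast
    show "\<exists>s \<sigma>1 \<sigma>2. strict_mono s \<and> X0 \<sigma>1 \<sigma>2 \<and> weak_L1_conv (\<rho>1 \<circ> s) \<sigma>1 \<and> weak_L1_conv (\<rho>2 \<circ> s) \<sigma>2"
      by (rule pair_compact[OF d mom])
  qed
qed

end
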